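(* Let $G$ be a finite group with $|G| = qp^k$, where $p < q$ are primes and $k \geq 1$, and suppose $m^*(G) = |G|$. Let $N$ be a minimal normal subgroup of $G$. Then $|N| = p^n$ for some $n \geq 1$ and $|G/C_G(N)| = qp^r$ for some $r \geq 1$ with $p^n < qp^r$. Furthermore, a Sylow $q$-subgroup of $G/C_G(N)$ acts irreducibly on $N$ (viewed as an $n$-dimensional vector space over $GF(p)$, with $G/C_G(N)$ acting by conjugation).
   Context: For $H \leq G$, $m_G(H) = |H|\,|C_G(H)|$ and $m^*(G) = \max\{ m_G(H) : H \leq G\}$. *)

theory Defs
  imports "HOL-Algebra.Algebra"
begin

definition centralizer :: "('a, 'b) monoid_scheme \<Rightarrow> 'a set \<Rightarrow> 'a set" where
  "centralizer G H = {g \<in> carrier G. \<forall>h \<in> H. g \<otimes>\<^bsub>G\<^esub> h = h \<otimes>\<^bsub>G\<^esub> g}"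

definition mG :: "('a, 'b) monoid_scheme \<Rightarrow> 'a set \<Rightarrow> nat" where
  "mG G H = card H * card (centralizer G H)"

definition mstar :: "('a, 'b) monoid_scheme \<Rightarrow> nat" where
  "mstar G = Max {mG G H | H. subgroup H G}"

definition minimal_normal :: "'a set \<Rightarrow> ('a, 'b) monoid_scheme \<Rightarrow> bool" where
  "minimal_normal N G \<longleftrightarrow> N \<lhd> G \<and> N \<noteq> {\<one>\<^bsub>G\<^esub>} \<and>
     (\<forall>M. M \<lhd> G \<and> M \<subseteq> N \<longrightarrow> M = {\<one>\<^bsub>G\<^esub>} \<or> M = N)"

definition sylow_subgroup :: "('a, 'b) monoid_scheme \<Rightarrow> nat \<Rightarrow> 'a set \<Rightarrow> bool" where
  "sylow_subgroup K q P \<longleftrightarrow> subgroup P K \<and> (\<exists>a. card P = q ^ a) \<and>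
     \<not> q dvd (order K div card P)"

(* A set Q of elements of G/C (cosets of C = C_G(N)) acts irreducibly by conjugation on
   the elementary abelian p-group N, i.e. the only Q-invariant subgroups
   (= GF(p)-subspaces) of N are {1} and N. *)
definition acts_irreducibly :: "('a, 'b) monoid_scheme \<Rightarrow> 'a set set \<Rightarrow> 'a set \<Rightarrow> bool" where
  "acts_irreducibly G Q N \<longleftrightarrow>
     (\<forall>M. subgroup M G \<and> M \<subseteq> N \<and>
          (\<forall>Y \<in> Q. \<forall>g \<in> Y. \<forall>m \<in> M. (g \<otimes>\<^bsub>G\<^esub> m) \<otimes>\<^bsub>G\<^esub> (inv\<^bsub>G\<^esub> g) \<in> M)
        \<longrightarrow> M = {\<one>\<^bsub>G\<^esub>} \<or> M = N)"

end

theory Submission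
  imports Defs
begin

lemma fix_mod:
  fixes J (structure)
  assumes J: "group J" and fin: "finite (carrier J)" and cJ: "card (carrier J) = p ^ t"
    and p: "Factorial_Ring.prime p" and finS: "finite S"
    and one: "\<And>s. s \<in> S \<Longrightarrow> act \<one> s = s"
    and mult: "\<And>a b s. a \<in> carrier J \<Longrightarrow> b \<in> carrier J \<Longrightarrow> s \<in> S \<Longrightarrow> act (a \<otimes> b) s = act a (act b s)"
    and cl: "\<And>a s. a \<in> carrier J \<Longrightarrow> s \<in> S \<Longrightarrow> act a s \<in> S"
  shows "card S mod p = card {s \<in> S. \<forall>a \<in> carrier J. act a s = s} mod p"
proof -
  interpret J: group J by (rule J)
  define \<phi> where "\<phi> = (\<lambda>a. restrict (act a) S)"
  have bij: "\<phi> a \<in> Bij S" if a: "a \<in> carrier J" for a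
  proof -
    have "bij_betw (act a) S S"
    proof (rule bij_betw_byWitness[where f'="act (inv a)"])
      show "\<forall>s\<in>S. act (inv a) (act a s) = s"
        using a by (metis J.inv_closed J.l_inv mult one)
      show "\<forall>s\<in>S. act a (act (inv a) s) = s"
        using a by (metis J.inv_closed J.r_inv mult one)
      show "act a ` S \<subseteq> S" using cl a by auto
      show "act (inv a) ` S \<subseteq> S" using cl a by auto
    qed
    then show ?thesis unfolding Bij_def \<phi>_def
      by (simp add: bij_betw_restrict_eq)
  qed
  have ga: "group_action J S \<phi>"
    unfolding group_action_def group_hom_def group_hom_axioms_def
  proof (intro conjI)
    show "group J" by (rule J)
    show "group (BijGroup S)" by (rule group_BijGroup)
    show "\<phi> \<in> hom J (BijGroup S)"
    proof (rule homI)
      show "\<phi> a \<in> carrier (BijGroup S)" if "a \<in> carrier J" for a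
        using bij[OF that] by (simp add: BijGroup_def)
      show "\<phi> (a \<otimes> b) = \<phi> a \<otimes>\<^bsub>BijGroup S\<^esub> \<phi> b" if "a \<in> carrier J" "b \<in> carrier J" for a b
        using that bij[OF that(1)] bij[OF that(2)]
        by (auto simp: BijGroup_def compose_def \<phi>_def mult cl fun_eq_iff)
    qed
  qed
  interpret ga: group_action J S \<phi> by (rule ga)
  define F where "F = {s \<in> S. \<forall>a \<in> carrier J. act a s = s}"
  have key: "card orb mod p = card (orb \<inter> F) mod p" if orb: "orb \<in> orbits J S \<phi>" for orb
  proof -
    obtain x where x: "x \<in> S" and ox: "orb = orbit J \<phi> x" using orb unfolding orbits_def by blast
    have "card orb * card (stabilizer J \<phi> x) = p ^ t"
      using ga.orbit_stabilizer_theorem[OF x] ox cJ by (simp add: order_def)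
    then have "card orb dvd p ^ t" by (metis dvd_triv_left)
    then obtain j where j: "card orb = p ^ j" using p by (auto simp: divides_primepow_nat)
    have xo: "x \<in> orb" using ga.orbit_refl[OF x] ox by simp
    show ?thesis
    proof (cases "x \<in> F")
      case True
      have "orb = {x}"
      proof
        show "orb \<subseteq> {x}" using True x unfolding ox orbit_def F_def \<phi>_def by auto
      qed (use xo in auto)
      then show ?thesis using True by auto
    next
      case False
      then obtain a where a: "a \<in> carrier J" "act a x \<noteq> x" using x unfolding F_def by auto
      have "act a x \<in> orb" using a x unfolding ox orbit_def \<phi>_def by auto
      then have "card orb \<noteq> 1" using xo a(2) by (metis card_1_singletonE singletonD)
      then have "j \<noteq> 0" using j by auto
      then have "card orb mod p = 0" using j by simp
      moreover have "orb \<inter> F = {}"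
      proof (rule ccontr)
        assume "orb \<inter> F \<noteq> {}"
        then obtain y where y: "y \<in> orb" "y \<in> F" by auto
        then have yS: "y \<in> S" unfolding F_def by auto
        have "orbit J \<phi> y = {y}" using y yS unfolding orbit_def F_def \<phi>_def by auto (metis J.one_closed)
        moreover have "orbit J \<phi> y = orb"
          using ga.disjoint_union[of orb "orbit J \<phi> y"] orb ga.orbit_refl[OF yS] y(1)
          unfolding orbits_def using yS by blast
        ultimately show False using xo \<open>card orb \<noteq> 1\<close> by auto
      qed
      ultimately show ?thesis by simp
    qed
  qed
  have fo: "finite (orbits J S \<phi>)"
    using finS ga.orbit_partition unfolding orbits_def by simp
  have "card S = (\<Sum>orb\<in>orbits J S \<phi>. card orb)"
    using ga.disjoint_sum[OF finS, of "\<lambda>_. 1::nat"] by simp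
  also have "\<dots> mod p = (\<Sum>orb\<in>orbits J S \<phi>. card (orb \<inter> F)) mod p"
    using key by (metis (no_types, lifting) mod_sum_eq sum.cong)
  also have "(\<Sum>orb\<in>orbits J S \<phi>. card (orb \<inter> F)) = (\<Sum>x\<in>S. if x \<in> F then 1 else 0)"
  proof -
    have "(\<Sum>orb\<in>orbits J S \<phi>. card (orb \<inter> F)) = (\<Sum>orb\<in>orbits J S \<phi>. \<Sum>x\<in>orb. if x \<in> F then 1 else 0)"
    proof (rule sum.cong)
      fix orb assume "orb \<in> orbits J S \<phi>"
      then have "orb \<subseteq> S" using ga.orbits_coverture by blast
      then have "finite orb" using finS finite_subset by blast
      then show "card (orb \<inter> F) = (\<Sum>x\<in>orb. if x \<in> F then 1 else 0)"
        by (simp add: sum.If_cases Int_def)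
    qed simp
    also have "\<dots> = (\<Sum>x\<in>S. if x \<in> F then 1 else 0)"
      by (rule ga.disjoint_sum[OF finS])
    finally show ?thesis .
  qed
  also have "\<dots> = card F"
    using finS by (simp add: sum.If_cases F_def Int_def)
  finally show ?thesis unfolding F_def .
qed

definition cj :: "('a, 'b) monoid_scheme \<Rightarrow> 'a \<Rightarrow> 'a set \<Rightarrow> 'a set" where
  "cj G g A = (\<lambda>a. g \<otimes>\<^bsub>G\<^esub> a \<otimes>\<^bsub>G\<^esub> inv\<^bsub>G\<^esub> g) ` A"

context group begin

lemma gcancel1 [simp]: "x \<in> carrier G \<Longrightarrow> y \<in> carrier G \<Longrightarrow> inv x \<otimes> (x \<otimes> y) = y"
  by (simp add: m_assoc[symmetric])

lemma gcancel2 [simp]: "x \<in> carrier G \<Longrightarrow> y \<in> carrier G \<Longrightarrow> x \<otimes> (inv x \<otimes> y) = y"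
  by (simp add: m_assoc[symmetric])

lemma cj_subset: "A \<subseteq> carrier G \<Longrightarrow> g \<in> carrier G \<Longrightarrow> cj G g A \<subseteq> carrier G"
  unfolding cj_def by auto

lemma cj_mem: "a \<in> A \<Longrightarrow> g \<otimes> a \<otimes> inv g \<in> cj G g A"
  unfolding cj_def by auto

lemma cj_card: assumes "A \<subseteq> carrier G" "g \<in> carrier G" shows "card (cj G g A) = card A"
  unfolding cj_def
proof (rule card_image)
  show "inj_on (\<lambda>a. g \<otimes> a \<otimes> inv g) A"
    by (rule inj_onI) (meson assms conjugation_is_inj subsetD)
qed

lemma cj_mult: assumes "A \<subseteq> carrier G" "g \<in> carrier G" "h \<in> carrier G"
  shows "cj G (g \<otimes> h) A = cj G g (cj G h A)"
  unfolding cj_def image_image using assms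
  by (intro image_cong refl) (use assms in \<open>auto simp: inv_mult_group m_assoc dest!: subsetD\<close>)

lemma cj_one: "A \<subseteq> carrier G \<Longrightarrow> cj G \<one> A = A"
  unfolding cj_def image_def by (force dest: subsetD)

lemma cj_inv_mem: assumes "A \<subseteq> carrier G" "g \<in> carrier G" "x \<in> carrier G"
  shows "x \<in> cj G g A \<longleftrightarrow> inv g \<otimes> x \<otimes> g \<in> A"
proof
  assume "x \<in> cj G g A"
  then obtain a where a: "a \<in> A" "x = g \<otimes> a \<otimes> inv g" unfolding cj_def by auto
  moreover have "a \<in> carrier G" using a assms by auto
  ultimately show "inv g \<otimes> x \<otimes> g \<in> A" using assms by (simp add: m_assoc)
next
  assume "inv g \<otimes> x \<otimes> g \<in> A"
  then have "g \<otimes> (inv g \<otimes> x \<otimes> g) \<otimes> inv g \<in> cj G g A" by (rule cj_mem)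
  moreover have "g \<otimes> (inv g \<otimes> x \<otimes> g) \<otimes> inv g = x" using assms by (simp add: m_assoc)
  ultimately show "x \<in> cj G g A" by simp
qed

lemma cj_coset: "cj G g A = g <# A #> inv g"
  unfolding cj_def l_coset_def r_coset_def by blast

lemma cj_subgroup: assumes "subgroup H G" "g \<in> carrier G" shows "subgroup (cj G g H) G"
  unfolding cj_coset using subgroup_conjugation_is_surj2 assms by blast

lemma card_subgroup_dvd: assumes "finite (carrier G)" "subgroup H G" shows "card H dvd order G"
  using lagrange[OF assms(2)] by (metis dvd_triv_right)

lemma card_sub_dvd: assumes "finite (carrier G)" "subgroup H G" "subgroup K G" "H \<subseteq> K"
  shows "card H dvd card K"
proof -
  interpret K: group "G\<lparr>carrier := K\<rparr>" using subgroup_imp_group assms by blast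
  have "subgroup H (G\<lparr>carrier := K\<rparr>)" using subgroup_incl assms by blast
  then show ?thesis using K.card_subgroup_dvd assms subgroup.subset finite_subset
    by (metis order_def partial_object.select_convs(1) partial_object.surjective partial_object.update_convs(1))
qed

lemma subgroup_card1: assumes "subgroup H G" "card H = 1" shows "H = {\<one>}"
  using assms subgroup.one_closed by (metis card_1_singletonE singletonD)

lemma subgroup_finite: "finite (carrier G) \<Longrightarrow> subgroup H G \<Longrightarrow> finite H"
  using subgroup.subset finite_subset by blast

lemma coprime_inter: assumes "finite (carrier G)" "subgroup A G" "subgroup B G" "coprime (card A) (card B)"
  shows "A \<inter> B = {\<one>}"
proof -
  have s: "subgroup (A \<inter> B) G" using assms subgroups_Inter_pair by blast
  have "card (A \<inter> B) dvd card A" "card (A \<inter> B) dvd card B"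
    using card_sub_dvd[OF assms(1) s] assms by auto
  then have "card (A \<inter> B) = 1" using assms(4) by (meson coprime_common_divisor_nat)
  then show ?thesis using subgroup_card1 s by blast
qed

lemma centralizer_subgroup: assumes "H \<subseteq> carrier G" shows "subgroup (centralizer G H) G"
proof (rule subgroupI)
  show "centralizer G H \<subseteq> carrier G" unfolding centralizer_def by auto
  show "centralizer G H \<noteq> {}" unfolding centralizer_def using assms by (auto intro!: exI[of _ \<one>] dest: subsetD)
  fix a b assume a: "a \<in> centralizer G H" and b: "b \<in> centralizer G H"
  then have ac: "a \<in> carrier G" and bc: "b \<in> carrier G" unfolding centralizer_def by auto
  show "inv a \<in> centralizer G H" unfolding centralizer_def
  proof (safe)
    show "inv a \<in> carrier G" using ac by simp
    fix h assume h: "h \<in> H"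
    then have hc: "h \<in> carrier G" using assms by auto
    have "a \<otimes> h = h \<otimes> a" using a h unfolding centralizer_def by auto
    then have "inv a \<otimes> (a \<otimes> h) \<otimes> inv a = inv a \<otimes> (h \<otimes> a) \<otimes> inv a" by simp
    then show "inv a \<otimes> h = h \<otimes> inv a" using ac hc by (simp add: m_assoc)
  qed
  show "a \<otimes> b \<in> centralizer G H" unfolding centralizer_def
  proof (safe)
    show "a \<otimes> b \<in> carrier G" using ac bc by simp
    fix h assume h: "h \<in> H"
    then have hc: "h \<in> carrier G" using assms by auto
    have "a \<otimes> h = h \<otimes> a" "b \<otimes> h = h \<otimes> b" using a b h unfolding centralizer_def by auto
    then show "a \<otimes> b \<otimes> h = h \<otimes> (a \<otimes> b)" using ac bc hc by (metis m_assoc)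
  qed
qed

lemma conj_fix:
  assumes fin: "finite (carrier G)" and J: "subgroup J G" and cJ: "card J = p ^ t" and p: "Factorial_Ring.prime p"
    and M: "M \<subseteq> carrier G" and inv: "\<And>j m. j \<in> J \<Longrightarrow> m \<in> M \<Longrightarrow> j \<otimes> m \<otimes> inv j \<in> M"
  shows "card M mod p = card {m \<in> M. \<forall>j \<in> J. j \<otimes> m = m \<otimes> j} mod p"
proof -
  have Jc: "J \<subseteq> carrier G" using J subgroup.subset by blast
  have gJ: "group (G\<lparr>carrier := J\<rparr>)" using subgroup_imp_group J by blast
  have "card M mod p = card {m \<in> M. \<forall>j \<in> carrier (G\<lparr>carrier := J\<rparr>). j \<otimes> m \<otimes> inv j = m} mod p"
  proof (rule fix_mod[OF gJ])
    show "finite (carrier (G\<lparr>carrier := J\<rparr>))" using fin Jc finite_subset by auto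
    show "card (carrier (G\<lparr>carrier := J\<rparr>)) = p ^ t" using cJ by simp
    show "Factorial_Ring.prime p" by (rule p)
    show "finite M" using fin M finite_subset by auto
    show "\<And>s. s \<in> M \<Longrightarrow> \<one>\<^bsub>G\<lparr>carrier := J\<rparr>\<^esub> \<otimes> s \<otimes> inv \<one>\<^bsub>G\<lparr>carrier := J\<rparr>\<^esub> = s"
      using M by auto
    show "a \<otimes>\<^bsub>G\<lparr>carrier := J\<rparr>\<^esub> b \<otimes> s \<otimes> inv (a \<otimes>\<^bsub>G\<lparr>carrier := J\<rparr>\<^esub> b) = a \<otimes> (b \<otimes> s \<otimes> inv b) \<otimes> inv a"
      if "a \<in> carrier (G\<lparr>carrier := J\<rparr>)" "b \<in> carrier (G\<lparr>carrier := J\<rparr>)" "s \<in> M" for a b s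
    proof -
      have "a \<in> carrier G" "b \<in> carrier G" "s \<in> carrier G" using that Jc M by auto
      then show ?thesis by (simp add: m_assoc inv_mult_group)
    qed
    show "\<And>a s. a \<in> carrier (G\<lparr>carrier := J\<rparr>) \<Longrightarrow> s \<in> M \<Longrightarrow> a \<otimes> s \<otimes> inv a \<in> M"
      using inv by auto
  qed
  moreover have "{m \<in> M. \<forall>j \<in> carrier (G\<lparr>carrier := J\<rparr>). j \<otimes> m \<otimes> inv j = m} = {m \<in> M. \<forall>j \<in> J. j \<otimes> m = m \<otimes> j}"
  proof -
    have "j \<otimes> m \<otimes> inv j = m \<longleftrightarrow> j \<otimes> m = m \<otimes> j" if "j \<in> J" "m \<in> M" for j m
    proof -
      have jc: "j \<in> carrier G" and mc: "m \<in> carrier G" using that Jc M by auto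
      show ?thesis
      proof
        assume "j \<otimes> m \<otimes> inv j = m"
        then have "j \<otimes> m \<otimes> inv j \<otimes> j = m \<otimes> j" by simp
        then show "j \<otimes> m = m \<otimes> j" using jc mc by (simp add: m_assoc)
      next
        assume "j \<otimes> m = m \<otimes> j"
        then show "j \<otimes> m \<otimes> inv j = m" using jc mc by (simp add: m_assoc)
      qed
    qed
    then show ?thesis by auto
  qed
  ultimately show ?thesis by simp
qed

end

context group begin

lemma coset_fix:
  assumes fin: "finite (carrier G)" and J: "subgroup J G" and cJ: "card J = p ^ t" and p: "Factorial_Ring.prime p"
    and S: "\<And>C. C \<in> S \<Longrightarrow> C \<subseteq> carrier G" and cl: "\<And>C j. C \<in> S \<Longrightarrow> j \<in> J \<Longrightarrow> C #> inv j \<in> S"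
    and finS: "finite S"
  shows "card S mod p = card {C \<in> S. \<forall>j \<in> J. C #> inv j = C} mod p"
proof -
  have Jc: "J \<subseteq> carrier G" using J subgroup.subset by blast
  have gJ: "group (G\<lparr>carrier := J\<rparr>)" using subgroup_imp_group J by blast
  have "card S mod p = card {C \<in> S. \<forall>j \<in> carrier (G\<lparr>carrier := J\<rparr>). C #> inv j = C} mod p"
  proof (rule fix_mod[OF gJ])
    show "finite (carrier (G\<lparr>carrier := J\<rparr>))" using fin Jc finite_subset by auto
    show "card (carrier (G\<lparr>carrier := J\<rparr>)) = p ^ t" using cJ by simp
    show "Factorial_Ring.prime p" by (rule p)
    show "finite S" by (rule finS)
    show "\<And>s. s \<in> S \<Longrightarrow> s #> inv \<one>\<^bsub>G\<lparr>carrier := J\<rparr>\<^esub> = s"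
      using S by auto
    show "s #> inv (a \<otimes>\<^bsub>G\<lparr>carrier := J\<rparr>\<^esub> b) = s #> inv b #> inv a"
      if "a \<in> carrier (G\<lparr>carrier := J\<rparr>)" "b \<in> carrier (G\<lparr>carrier := J\<rparr>)" "s \<in> S" for a b s
    proof -
      have "a \<in> carrier G" "b \<in> carrier G" "s \<subseteq> carrier G" using that Jc S by auto
      then show ?thesis by (simp add: coset_mult_assoc inv_mult_group)
    qed
    show "\<And>a s. a \<in> carrier (G\<lparr>carrier := J\<rparr>) \<Longrightarrow> s \<in> S \<Longrightarrow> s #> inv a \<in> S"
      using cl by auto
  qed
  then show ?thesis by simp
qed

lemma coset_fixed_conj:
  assumes H: "subgroup H G" and a: "a \<in> carrier G" and b: "b \<in> carrier G" and eq: "H #> a #> b = H #> a"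
  shows "a \<otimes> b \<otimes> inv a \<in> H"
proof -
  have Hc: "H \<subseteq> carrier G" using H subgroup.subset by blast
  have "a \<otimes> b \<in> H #> (a \<otimes> b)" using rcos_self a b H by simp
  also have "H #> (a \<otimes> b) = H #> a" using eq coset_mult_assoc Hc a b by simp
  finally have "a \<otimes> b \<in> H #> a" .
  then show ?thesis using subgroup.rcos_module_imp[OF H is_group a] by simp
qed


end

context group begin

lemma sylow2:
  assumes fin: "finite (carrier G)" and P: "subgroup P G" and p: "Factorial_Ring.prime p"
    and nd: "\<not> p dvd card (rcosets P)" and J: "subgroup J G" and cJ: "card J = p ^ t"
  shows "\<exists>c \<in> carrier G. J \<subseteq> cj G c P"
proof -
  have Pc: "P \<subseteq> carrier G" using P subgroup.subset by blast
  have Jc: "J \<subseteq> carrier G" using J subgroup.subset by blast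
  have "card (rcosets P) mod p = card {C \<in> rcosets P. \<forall>j \<in> J. C #> inv j = C} mod p"
  proof (rule coset_fix[OF fin J cJ p])
    show "\<And>C. C \<in> rcosets P \<Longrightarrow> C \<subseteq> carrier G" using subgroup.rcosets_carrier[OF P is_group] by blast
    show "C #> inv j \<in> rcosets P" if "C \<in> rcosets P" "j \<in> J" for C j
    proof -
      from that(1) obtain g where g: "g \<in> carrier G" "C = P #> g" by (auto simp: RCOSETS_def)
      have jc: "j \<in> carrier G" using that Jc by auto
      have "C #> inv j = P #> (g \<otimes> inv j)" using g coset_mult_assoc[OF Pc g(1) inv_closed[OF jc]] by simp
      then show ?thesis using rcosetsI[OF Pc] g jc by simp
    qed
    show "finite (rcosets P)" using rcosets_subset_PowG[OF P] fin by (simp add: finite_subset)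
  qed
  then have "card {C \<in> rcosets P. \<forall>j \<in> J. C #> inv j = C} \<noteq> 0"
    using nd by (metis dvd_eq_mod_eq_0 mod_0)
  then have "{C \<in> rcosets P. \<forall>j \<in> J. C #> inv j = C} \<noteq> {}" by force
  then obtain C where C: "C \<in> rcosets P" "\<forall>j \<in> J. C #> inv j = C" by blast
  obtain c0 where c0: "c0 \<in> carrier G" "C = P #> c0" using C(1) unfolding RCOSETS_def by auto
  have "J \<subseteq> cj G (inv c0) P"
  proof
    fix j assume j: "j \<in> J"
    then have jc: "j \<in> carrier G" using Jc by auto
    have "P #> c0 #> inv j = P #> c0" using C(2) j c0(2) by simp
    then have "c0 \<otimes> inv j \<otimes> inv c0 \<in> P" using coset_fixed_conj[OF P c0(1) inv_closed[OF jc]] by simp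
    then have "inv (c0 \<otimes> inv j \<otimes> inv c0) \<in> P" by (rule subgroup.m_inv_closed[OF P])
    moreover have "inv (c0 \<otimes> inv j \<otimes> inv c0) = c0 \<otimes> j \<otimes> inv c0" using c0(1) jc by (simp add: inv_mult_group m_assoc)
    ultimately have "c0 \<otimes> j \<otimes> inv c0 \<in> P" by simp
    then show "j \<in> cj G (inv c0) P" using cj_inv_mem[OF Pc inv_closed[OF c0(1)] jc] c0(1) by simp
  qed
  then show ?thesis using c0 by blast
qed


end

context group begin

lemma norm_grow:
  assumes fin: "finite (carrier G)" and p: "Factorial_Ring.prime p"
    and A: "subgroup A G" and cA: "card A = p ^ s" and I: "subgroup I G" and IA: "I \<subset> A"
  shows "\<exists>a \<in> A. a \<notin> I \<and> cj G a I = I"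
proof -
  have Ac: "A \<subseteq> carrier G" using A subgroup.subset by blast
  have Ic: "I \<subseteq> carrier G" using I subgroup.subset by blast
  interpret GA: group "G\<lparr>carrier := A\<rparr>" using subgroup_imp_group A by blast
  have IsA: "subgroup I (G\<lparr>carrier := A\<rparr>)" using subgroup_incl I A IA by blast
  define S where "S = {I #> a | a. a \<in> A}"
  have S_eq: "S = rcosets\<^bsub>G\<lparr>carrier := A\<rparr>\<^esub> I" unfolding S_def RCOSETS_def by auto
  have finA: "finite A" using fin Ac finite_subset by blast
  have lag: "card S * card I = card A"
    using GA.lagrange[OF IsA] S_eq by (simp add: order_def)
  have cI: "card I dvd p ^ s" using card_sub_dvd[OF fin I A] IA cA by auto
  have "card I < card A" using IA finA psubset_card_mono by blast
  then have "card S \<noteq> 1" using lag by auto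
  moreover have "card S dvd p ^ s" using lag cA by (metis dvd_triv_left)
  ultimately have pS: "p dvd card S" using p by (auto simp: divides_primepow_nat)
  have finS: "finite S" unfolding S_def using finA by auto
  obtain e where e: "card I = p ^ e" using cI p by (auto simp: divides_primepow_nat)
  have "card S mod p = card {C \<in> S. \<forall>j \<in> I. C #> inv j = C} mod p"
  proof (rule coset_fix[OF fin I e p])
    show "C \<subseteq> carrier G" if "C \<in> S" for C
    proof -
      from that obtain a where "a \<in> A" "C = I #> a" unfolding S_def by auto
      then show ?thesis using r_coset_subset_G[OF Ic] Ac by auto
    qed
    show "C #> inv j \<in> S" if "C \<in> S" "j \<in> I" for C j
    proof -
      from that(1) obtain g where g: "g \<in> A" "C = I #> g" unfolding S_def by auto
      have jA: "j \<in> A" using that IA by auto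
      have gc: "g \<in> carrier G" and jc: "j \<in> carrier G" using g jA Ac by auto
      have "C #> inv j = I #> (g \<otimes> inv j)" using g coset_mult_assoc[OF Ic gc inv_closed[OF jc]] by simp
      moreover have "g \<otimes> inv j \<in> A" using g jA A by (simp add: subgroup.m_closed subgroup.m_inv_closed)
      ultimately show ?thesis unfolding S_def by auto
    qed
    show "finite S" by (rule finS)
  qed
  then have F0: "p dvd card {C \<in> S. \<forall>j \<in> I. C #> inv j = C}" using pS by (simp add: mod_eq_0_iff_dvd[symmetric])
  define F where "F = {C \<in> S. \<forall>j \<in> I. C #> inv j = C}"
  have I1: "I #> \<one> = I" using coset_mult_one[OF Ic] .
  have IS: "I \<in> S" unfolding S_def using I1 subgroup.one_closed[OF A] by force
  have "\<forall>j\<in>I. I #> inv j = I" using subgroup.rcos_const[OF I is_group] subgroup.m_inv_closed[OF I] by blast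
  then have IF: "I \<in> F" unfolding F_def using IS by simp
  have finF: "finite F" unfolding F_def using finS by auto
  have "card F \<noteq> 0" using IF finF by (metis card_0_eq empty_iff)
  moreover have "p dvd card F" unfolding F_def by (rule F0)
  ultimately have "card F \<ge> p" by (simp add: dvd_imp_le)
  moreover have "p \<ge> 2" using prime_ge_2_nat[OF p] .
  ultimately have "card F \<ge> 2" by linarith
  have "\<not> F \<subseteq> {I}"
  proof
    assume "F \<subseteq> {I}"
    then have "card F \<le> card {I}" by (intro card_mono) auto
    then show False using \<open>card F \<ge> 2\<close> by simp
  qed
  then obtain C where C: "C \<in> F" "C \<noteq> I" by auto
  have "C \<in> S" using C(1) unfolding F_def by simp
  then obtain a where a: "a \<in> A" "C = I #> a" unfolding S_def by auto
  have ac: "a \<in> carrier G" using a Ac by auto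
  have aI: "a \<notin> I"
  proof
    assume "a \<in> I"
    then have "I #> a = I" by (rule subgroup.rcos_const[OF I is_group])
    then show False using a(2) C(2) by simp
  qed
  have sub: "cj G a I \<subseteq> I"
  proof
    fix y assume "y \<in> cj G a I"
    then obtain x where x: "x \<in> I" "y = a \<otimes> x \<otimes> inv a" unfolding cj_def by auto
    have xc: "x \<in> carrier G" using x Ic by auto
    have "inv x \<in> I" using x(1) by (rule subgroup.m_inv_closed[OF I])
    moreover have "\<forall>j\<in>I. C #> inv j = C" using C(1) unfolding F_def by simp
    ultimately have "C #> inv (inv x) = C" by blast
    then have "I #> a #> inv (inv x) = I #> a" using a(2) by simp
    then show "y \<in> I" using coset_fixed_conj[OF I ac] x xc by simp
  qed
  have "card (cj G a I) = card I" using cj_card Ic ac by blast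
  moreover have "finite I" using finA IA finite_subset by blast
  ultimately have "cj G a I = I" using sub card_subset_eq by blast
  then show ?thesis using a aI by blast
qed


end

context group begin

lemma prod_decomp:
  assumes fin: "finite (carrier G)" and A: "subgroup A G" and Y: "subgroup Y G"
    and AY: "A \<inter> Y = {\<one>}" and c: "card A * card Y = order G" and w: "w \<in> carrier G"
  shows "\<exists>a \<in> A. \<exists>y \<in> Y. w = a \<otimes> y"
proof -
  have Ac: "A \<subseteq> carrier G" using A subgroup.subset by blast
  have Yc: "Y \<subseteq> carrier G" using Y subgroup.subset by blast
  define f where "f = (\<lambda>(a, y). a \<otimes> y)"
  have inj: "inj_on f (A \<times> Y)"
  proof (rule inj_onI, clarsimp simp: f_def)
    fix a y a' y' assume as: "a \<in> A" "y \<in> Y" "a' \<in> A" "y' \<in> Y" "a \<otimes> y = a' \<otimes> y'"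
    have c: "a \<in> carrier G" "y \<in> carrier G" "a' \<in> carrier G" "y' \<in> carrier G" using as Ac Yc by auto
    have "inv a' \<otimes> a = y' \<otimes> inv y"
    proof -
      have "inv a' \<otimes> (a \<otimes> y) \<otimes> inv y = inv a' \<otimes> (a' \<otimes> y') \<otimes> inv y" using as by simp
      then show ?thesis using c by (simp add: m_assoc)
    qed
    moreover have "inv a' \<otimes> a \<in> A" using as A by (simp add: subgroup.m_closed subgroup.m_inv_closed)
    moreover have "y' \<otimes> inv y \<in> Y" using as Y by (simp add: subgroup.m_closed subgroup.m_inv_closed)
    ultimately have "inv a' \<otimes> a = \<one>" using AY by auto
    then have "inv a' \<otimes> a \<otimes> inv a = inv a" using c by simp
    then have "inv a' = inv a" using c by (simp add: m_assoc)
    then have "inv (inv a') = inv (inv a)" by simp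
    then have "a = a'" using c by simp
    then show "a = a' \<and> y = y'" using as c by simp
  qed
  have "card (f ` (A \<times> Y)) = card A * card Y" using card_image[OF inj] card_cartesian_product by simp
  moreover have "f ` (A \<times> Y) \<subseteq> carrier G" unfolding f_def using Ac Yc by auto
  ultimately have "f ` (A \<times> Y) = carrier G" using c fin card_subset_eq[of "carrier G" "f ` (A \<times> Y)"] unfolding order_def by simp
  then have "w \<in> f ` (A \<times> Y)" using w by simp
  then obtain a y where "a \<in> A" "y \<in> Y" "w = f (a, y)" by auto
  then show ?thesis unfolding f_def by auto
qed

end

context group begin

lemma cj_self: assumes H: "subgroup H G" and h: "h \<in> H" and fin: "finite (carrier G)"
  shows "cj G h H = H"
proof -
  have Hc: "H \<subseteq> carrier G" using H subgroup.subset by blast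
  have hc: "h \<in> carrier G" using h Hc by auto
  have "cj G h H \<subseteq> H" unfolding cj_def using H h by (auto intro!: subgroup.m_closed subgroup.m_inv_closed)
  moreover have "card (cj G h H) = card H" using cj_card[OF Hc hc] .
  moreover have "finite H" using fin Hc finite_subset by blast
  ultimately show ?thesis using card_subset_eq by blast
qed

lemma norm_subgroup: assumes Hc: "H \<subseteq> carrier G" shows "subgroup {x \<in> carrier G. cj G x H = H} G"
proof (rule subgroupI)
  show "{x \<in> carrier G. cj G x H = H} \<subseteq> carrier G" by auto
  show "{x \<in> carrier G. cj G x H = H} \<noteq> {}" using cj_one[OF Hc] by auto
  fix a b assume a: "a \<in> {x \<in> carrier G. cj G x H = H}" and b: "b \<in> {x \<in> carrier G. cj G x H = H}"
  have ac: "a \<in> carrier G" and ha: "cj G a H = H" using a by auto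
  have bc: "b \<in> carrier G" and hb: "cj G b H = H" using b by auto
  have "cj G (inv a) H = cj G (inv a) (cj G a H)" using ha by simp
  also have "\<dots> = cj G (inv a \<otimes> a) H" using cj_mult[OF Hc inv_closed[OF ac] ac] by simp
  also have "\<dots> = H" using cj_one[OF Hc] ac by simp
  finally show "inv a \<in> {x \<in> carrier G. cj G x H = H}" using ac by simp
  have "cj G (a \<otimes> b) H = cj G a (cj G b H)" using cj_mult[OF Hc ac bc] .
  then show "a \<otimes> b \<in> {x \<in> carrier G. cj G x H = H}" using ha hb ac bc by simp
qed

lemma coprime_primes_pow: "Factorial_Ring.prime p \<Longrightarrow> Factorial_Ring.prime q \<Longrightarrow> p \<noteq> q \<Longrightarrow> coprime (p ^ i) (q::nat)"
  by (simp add: primes_coprime)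

lemma dvd_q_ppow: fixes p q d :: nat assumes p: "Factorial_Ring.prime p" and q: "Factorial_Ring.prime q" and pq: "p \<noteq> q"
  and d: "d dvd q * p ^ s" and nq: "\<not> q dvd d" shows "\<exists>j. d = p ^ j"
proof -
  have "coprime d q" using prime_imp_coprime[OF q nq] by (simp add: coprime_commute)
  then have "d dvd p ^ s" using d by (metis coprime_dvd_mult_right_iff)
  then show ?thesis using p by (auto simp: divides_primepow_nat)
qed

lemma not_simple:
  assumes fin: "finite (carrier G)" and p: "Factorial_Ring.prime p" and q: "Factorial_Ring.prime q"
    and pq: "p \<noteq> q" and ord: "order G = q * p ^ s" and s: "s \<ge> 1"
  shows "(\<exists>Q0. subgroup Q0 G \<and> card Q0 = q \<and> (\<forall>Q'. subgroup Q' G \<and> card Q' = q \<longrightarrow> Q' = Q0))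
       \<or> (\<exists>M. M \<lhd> G \<and> M \<noteq> {\<one>} \<and> (\<exists>j. card M = p ^ j))"
proof -
  have o1: "order G = p ^ s * q" using ord by (simp add: mult.commute)
  obtain P where P: "subgroup P G" "card P = p ^ s"
    using sylow_thm[OF p is_group o1 fin] by blast
  have o2: "order G = q ^ 1 * p ^ s" using ord by simp
  obtain Y where Y0: "subgroup Y G" "card Y = q ^ 1"
    using sylow_thm[OF q is_group o2 fin] by blast
  have Y: "subgroup Y G" "card Y = q" using Y0 by simp_all
  have Pc: "P \<subseteq> carrier G" using P subgroup.subset by blast
  have Yc: "Y \<subseteq> carrier G" using Y subgroup.subset by blast
  have cop: "\<And>i. coprime (p ^ i) q" using coprime_primes_pow[OF p q pq] .
  have p2: "p \<ge> 2" using prime_ge_2_nat[OF p] .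
  have q2: "q \<ge> 2" using prime_ge_2_nat[OF q] .
  have "p ^ 1 \<le> p ^ s" using s p2 by (intro power_increasing) auto
  then have ps2: "p ^ s \<ge> 2" using p2 by simp
  have cjP: "subgroup (cj G g P) G" "card (cj G g P) = p ^ s" if "g \<in> carrier G" for g
    using cj_subgroup[OF P(1) that] cj_card[OF Pc that] P by auto
  show ?thesis
  proof (cases "\<forall>g \<in> carrier G. cj G g P = P")
    case True
    have "P \<lhd> G" unfolding normal_inv_iff
    proof (intro conjI ballI)
      show "subgroup P G" by (rule P)
      fix x h assume "x \<in> carrier G" "h \<in> P"
      then show "x \<otimes> h \<otimes> inv x \<in> P" using True cj_mem by metis
    qed
    moreover have "P \<noteq> {\<one>}" using P(2) ps2 by auto
    ultimately show ?thesis using P by blast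
  next
    case False
    then obtain g0 where g0: "g0 \<in> carrier G" "cj G g0 P \<noteq> P" by blast
    define D where "D = {x \<in> carrier G. \<forall>g \<in> carrier G. x \<in> cj G g P}"
    have DP: "D \<subseteq> P" unfolding D_def using cj_one[OF Pc] by auto
    have Dsub: "subgroup D G"
    proof (rule subgroupI)
      show "D \<subseteq> carrier G" unfolding D_def by auto
      have "\<forall>g\<in>carrier G. \<one> \<in> cj G g P" using cjP(1) subgroup.one_closed by blast
      then show "D \<noteq> {}" unfolding D_def by blast
      fix a b assume a: "a \<in> D" and b: "b \<in> D"
      have ac: "a \<in> carrier G" and a': "\<forall>g\<in>carrier G. a \<in> cj G g P" using a unfolding D_def by auto
      have bc: "b \<in> carrier G" and b': "\<forall>g\<in>carrier G. b \<in> cj G g P" using b unfolding D_def by auto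
      have "\<forall>g\<in>carrier G. inv a \<in> cj G g P" using a' subgroup.m_inv_closed[OF cjP(1)] by blast
      then show "inv a \<in> D" unfolding D_def using ac by simp
      have "\<forall>g\<in>carrier G. a \<otimes> b \<in> cj G g P" using a' b' subgroup.m_closed[OF cjP(1)] by blast
      then show "a \<otimes> b \<in> D" unfolding D_def using ac bc by simp
    qed
    have Dn: "D \<lhd> G" unfolding normal_inv_iff
    proof (intro conjI ballI)
      show "subgroup D G" by (rule Dsub)
      fix x h assume x: "x \<in> carrier G" and h: "h \<in> D"
      have hc: "h \<in> carrier G" using h unfolding D_def by auto
      have "x \<otimes> h \<otimes> inv x \<in> cj G g P" if g: "g \<in> carrier G" for g
      proof -
        have "h \<in> cj G (inv x \<otimes> g) P" using h g x unfolding D_def by auto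
        then have "inv (inv x \<otimes> g) \<otimes> h \<otimes> (inv x \<otimes> g) \<in> P"
          using cj_inv_mem[OF Pc _ hc] g x by auto
        moreover have "inv (inv x \<otimes> g) \<otimes> h \<otimes> (inv x \<otimes> g) = inv g \<otimes> (x \<otimes> h \<otimes> inv x) \<otimes> g"
          using g x hc by (simp add: inv_mult_group m_assoc)
        ultimately show ?thesis using cj_inv_mem[OF Pc g] g x hc by simp
      qed
      then show "x \<otimes> h \<otimes> inv x \<in> D" unfolding D_def using x hc by auto
    qed
    show ?thesis
    proof (cases "D = {\<one>}")
      case False
      have "card D dvd p ^ s" using card_sub_dvd[OF fin Dsub P(1) DP] P(2) by simp
      then obtain j where "card D = p ^ j" using p by (auto simp: divides_primepow_nat)
      then show ?thesis using Dn False by blast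
    next
      case D1: True
      define Nm where "Nm = {x \<in> carrier G. cj G x P = P}"
      have Nms: "subgroup Nm G" unfolding Nm_def by (rule norm_subgroup[OF Pc])
      have PNm: "P \<subseteq> Nm" unfolding Nm_def using cj_self[OF P(1) _ fin] Pc by auto
      have NmP: "Nm = P"
      proof -
        have "card P dvd card Nm" using card_sub_dvd[OF fin P(1) Nms PNm] .
        then obtain d where d: "card Nm = p ^ s * d" using P(2) by auto
        have "card Nm dvd q * p ^ s" using card_subgroup_dvd[OF fin Nms] ord by simp
        then have "d dvd q" using d p2 by (simp add: mult.commute)
        then have "d = 1 \<or> d = q" using q by (simp add: prime_nat_iff)
        moreover have "d \<noteq> q"
        proof
          assume "d = q"
          then have "card Nm = card (carrier G)" using d ord by (simp add: order_def mult.commute)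
          then have "Nm = carrier G" using card_subset_eq[OF fin] subgroup.subset[OF Nms] by blast
          then show False using g0 unfolding Nm_def by auto
        qed
        ultimately have "card Nm = card P" using d P(2) by simp
        moreover have "finite Nm" using fin subgroup.subset[OF Nms] finite_subset by blast
        ultimately show ?thesis using card_subset_eq PNm by metis
      qed
      have PY: "P \<inter> Y = {\<one>}" using coprime_inter[OF fin P(1) Y(1)] P(2) Y(2) cop by simp
      have distinct: "cj G y1 P \<noteq> cj G y2 P" if "y1 \<in> Y" "y2 \<in> Y" "y1 \<noteq> y2" for y1 y2
      proof
        assume eq: "cj G y1 P = cj G y2 P"
        have c1: "y1 \<in> carrier G" and c2: "y2 \<in> carrier G" using that Yc by auto
        have "cj G (inv y2 \<otimes> y1) P = cj G (inv y2) (cj G y1 P)" using cj_mult[OF Pc inv_closed[OF c2] c1] .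
        also have "\<dots> = cj G (inv y2) (cj G y2 P)" using eq by simp
        also have "\<dots> = cj G (inv y2 \<otimes> y2) P" using cj_mult[OF Pc inv_closed[OF c2] c2] by simp
        also have "\<dots> = P" using cj_one[OF Pc] c2 by simp
        finally have "inv y2 \<otimes> y1 \<in> Nm" unfolding Nm_def using c1 c2 by simp
        moreover have "inv y2 \<otimes> y1 \<in> Y" using that Y(1) by (simp add: subgroup.m_closed subgroup.m_inv_closed)
        ultimately have "inv y2 \<otimes> y1 = \<one>" using NmP PY by auto
        then have "y2 \<otimes> (inv y2 \<otimes> y1) = y2" using c2 by simp
        then show False using that c1 c2 by simp
      qed
      define Pairs where "Pairs = {(g, h). g \<in> carrier G \<and> h \<in> carrier G \<and> cj G g P \<noteq> cj G h P \<and> cj G g P \<inter> cj G h P \<noteq> {\<one>}}"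
      show ?thesis
      proof (cases "Pairs = {}")
        case True
        have triv: "cj G g P \<inter> cj G h P = {\<one>}" if "g \<in> carrier G" "h \<in> carrier G" "cj G g P \<noteq> cj G h P" for g h
          using True that unfolding Pairs_def by auto
        define U where "U = (\<Union>y\<in>Y. cj G y P - {\<one>})"
        have finY: "finite Y" using fin Yc finite_subset by blast
        have cardU: "card U = q * (p ^ s - 1)" unfolding U_def
        proof (subst card_UN_disjoint)
          show "finite Y" by (rule finY)
          show "\<forall>i\<in>Y. finite (cj G i P - {\<one>})"
            using fin cj_subset[OF Pc] Yc finite_subset by blast
          show "\<forall>i\<in>Y. \<forall>j\<in>Y. i \<noteq> j \<longrightarrow> (cj G i P - {\<one>}) \<inter> (cj G j P - {\<one>}) = {}"
          proof (intro ballI impI)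
            fix i j assume ij: "i \<in> Y" "j \<in> Y" "i \<noteq> j"
            have ic: "i \<in> carrier G" and jc: "j \<in> carrier G" using ij Yc by auto
            have "cj G i P \<noteq> cj G j P" using distinct ij by blast
            then have "cj G i P \<inter> cj G j P = {\<one>}" using triv[OF ic jc] by blast
            then show "(cj G i P - {\<one>}) \<inter> (cj G j P - {\<one>}) = {}" by auto
          qed
          have "card (cj G y P - {\<one>}) = p ^ s - 1" if "y \<in> Y" for y
          proof -
            have yc: "y \<in> carrier G" using that Yc by auto
            have "\<one> \<in> cj G y P" using cjP(1)[OF yc] subgroup.one_closed by blast
            moreover have "finite (cj G y P)" using fin cj_subset[OF Pc yc] finite_subset by blast
            ultimately show ?thesis using cjP(2)[OF yc] by (simp add: card_Diff_singleton)
          qed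
          then show "(\<Sum>i\<in>Y. card (cj G i P - {\<one>})) = q * (p ^ s - 1)" using Y(2) by simp
        qed
        have Uc: "U \<subseteq> carrier G - {\<one>}" unfolding U_def using cj_subset[OF Pc] Yc by blast
        define W where "W = carrier G - {\<one>} - U"
        have cW: "card W = q - 1"
        proof -
          have f1: "finite (carrier G - {\<one>})" using fin by simp
          have "card (carrier G - {\<one>}) = q * p ^ s - 1" using ord fin by (simp add: order_def card_Diff_singleton)
          then have "card W = q * p ^ s - 1 - q * (p ^ s - 1)"
            unfolding W_def using card_Diff_subset[OF finite_subset[OF Uc f1] Uc] cardU by simp
          also have "\<dots> = q - 1" using ps2 q2 by (simp add: diff_mult_distrib2)
          finally show ?thesis .
        qed
        have key: "Q' - {\<one>} = W" if Q': "subgroup Q' G" "card Q' = q" for Q'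
        proof -
          have Q'c: "Q' \<subseteq> carrier G" using Q' subgroup.subset by blast
          have "Q' \<inter> cj G y P = {\<one>}" if "y \<in> Y" for y
          proof -
            have yc: "y \<in> carrier G" using that Yc by auto
            show ?thesis using coprime_inter[OF fin Q'(1) cjP(1)[OF yc]] Q'(2) cjP(2)[OF yc] cop
              by (simp add: coprime_commute)
          qed
          then have sub: "Q' - {\<one>} \<subseteq> W" unfolding W_def U_def using Q'c by blast
          have "finite W" unfolding W_def using fin by simp
          moreover have "card (Q' - {\<one>}) = q - 1"
            using Q' subgroup.one_closed fin Q'c finite_subset by (metis card_Diff_singleton)
          ultimately show ?thesis using sub cW card_subset_eq by metis
        qed
        have "\<forall>Q'. subgroup Q' G \<and> card Q' = q \<longrightarrow> Q' = Y"
        proof (intro allI impI)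
          fix Q' assume Q': "subgroup Q' G \<and> card Q' = q"
          have "Q' - {\<one>} = Y - {\<one>}" using key[of Q'] key[OF Y] Q' by simp
          moreover have "\<one> \<in> Q'" "\<one> \<in> Y" using Q' Y subgroup.one_closed by blast+
          ultimately show "Q' = Y" by blast
        qed
        then show ?thesis using Y by blast
      next
        case False
        have finPairs: "finite Pairs"
        proof (rule finite_subset)
          show "Pairs \<subseteq> carrier G \<times> carrier G" unfolding Pairs_def by auto
          show "finite (carrier G \<times> carrier G)" using fin by simp
        qed
        define cI where "cI = (\<lambda>x. card (cj G (fst x) P \<inter> cj G (snd x) P))"
        have "Max (cI ` Pairs) \<in> cI ` Pairs" using False finPairs by (intro Max_in) auto
        then obtain gh where gh: "gh \<in> Pairs" "cI gh = Max (cI ` Pairs)" by auto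
        have mx: "cI x \<le> cI gh" if "x \<in> Pairs" for x
          using gh(2) finPairs that by simp
        obtain g h where ghe: "gh = (g, h)" by fastforce
        have gc: "g \<in> carrier G" and hc: "h \<in> carrier G" and AB: "cj G g P \<noteq> cj G h P"
          and AB1: "cj G g P \<inter> cj G h P \<noteq> {\<one>}" using gh(1) ghe unfolding Pairs_def by auto
        define A where "A = cj G g P"
        define B where "B = cj G h P"
        define I where "I = A \<inter> B"
        have As: "subgroup A G" "card A = p ^ s" unfolding A_def using cjP gc by auto
        have Bs: "subgroup B G" "card B = p ^ s" unfolding B_def using cjP hc by auto
        have Ac: "A \<subseteq> carrier G" using As subgroup.subset by blast
        have Bc: "B \<subseteq> carrier G" using Bs subgroup.subset by blast
        have finA: "finite A" using fin Ac finite_subset by blast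
        have finB: "finite B" using fin Bc finite_subset by blast
        have Is: "subgroup I G" unfolding I_def using As Bs subgroups_Inter_pair by blast
        have Ic: "I \<subseteq> carrier G" using Is subgroup.subset by blast
        have I1: "I \<noteq> {\<one>}" unfolding I_def A_def B_def by (rule AB1)
        have cIgh: "cI gh = card I" unfolding cI_def I_def A_def B_def ghe by simp
        have IA: "I \<subset> A"
        proof -
          have "I \<noteq> A"
          proof
            assume "I = A"
            then have "A \<subseteq> B" unfolding I_def by auto
            then have "A = B" using card_subset_eq[OF finB] As(2) Bs(2) by simp
            then show False using AB unfolding A_def B_def by simp
          qed
          then show ?thesis unfolding I_def by auto
        qed
        have IB: "I \<subset> B"
        proof -
          have "I \<noteq> B"
          proof
            assume "I = B"
            then have "B \<subseteq> A" unfolding I_def by auto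
            then have "B = A" using card_subset_eq[OF finA] As(2) Bs(2) by simp
            then show False using AB unfolding A_def B_def by simp
          qed
          then show ?thesis unfolding I_def by auto
        qed
        obtain a where a: "a \<in> A" "a \<notin> I" "cj G a I = I" using norm_grow[OF fin p As Is IA] by blast
        obtain b where b: "b \<in> B" "b \<notin> I" "cj G b I = I" using norm_grow[OF fin p Bs Is IB] by blast
        define J where "J = {x \<in> carrier G. cj G x I = I}"
        have Js: "subgroup J G" unfolding J_def by (rule norm_subgroup[OF Ic])
        have IJ: "I \<subseteq> J" unfolding J_def using cj_self[OF Is _ fin] Ic by auto
        have aJ: "a \<in> J" unfolding J_def using a Ac by auto
        have bJ: "b \<in> J" unfolding J_def using b Bc by auto
        have one_I: "\<one> \<in> I" using Is subgroup.one_closed by blast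
        have False
        proof (cases "q dvd card J")
          case False
          have "card J dvd q * p ^ s" using card_subgroup_dvd[OF fin Js] ord by simp
          then obtain t where t: "card J = p ^ t" using dvd_q_ppow[OF p q pq _ False] by blast
          have lagP: "card (rcosets P) * card P = order G" using lagrange[OF P(1)] .
          then have "card (rcosets P) = q" using ord P(2) p2 by simp
          then have nd: "\<not> p dvd card (rcosets P)" using p q pq by (metis prime_nat_iff prime_gt_1_nat less_irrefl)
          obtain c where c: "c \<in> carrier G" "J \<subseteq> cj G c P" using sylow2[OF fin P(1) p nd Js t] by blast
          have big: "Z = cj G c P" if Z: "Z = cj G g' P" "g' \<in> carrier G" "I \<subseteq> Z" "x \<in> Z" "x \<notin> I" "x \<in> J" for Z g' x
          proof (rule ccontr)
            assume ne: "Z \<noteq> cj G c P"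
            have "x \<in> Z \<inter> cj G c P" using Z c by auto
            moreover have "x \<noteq> \<one>" using Z(5) one_I by auto
            ultimately have "Z \<inter> cj G c P \<noteq> {\<one>}" by auto
            then have inP: "(g', c) \<in> Pairs" unfolding Pairs_def using Z ne c by auto
            have "I \<subset> Z \<inter> cj G c P" using Z IJ c by auto
            moreover have "finite (Z \<inter> cj G c P)" using fin cj_subset[OF Pc c(1)] finite_subset by blast
            ultimately have "card I < card (Z \<inter> cj G c P)" by (rule psubset_card_mono[rotated])
            moreover have "cI (g', c) = card (Z \<inter> cj G c P)" unfolding cI_def using Z by simp
            ultimately show False using mx[OF inP] cIgh by simp
          qed
          have "A = cj G c P" using big[of A g a] A_def gc IA a aJ by auto
          moreover have "B = cj G c P" using big[of B h b] B_def hc IB b bJ by auto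
          ultimately show False using AB unfolding A_def B_def by simp
        next
          case True
          then obtain m' where m': "card J = q * m'" by blast
          interpret GJ: group "G\<lparr>carrier := J\<rparr>" using subgroup_imp_group Js by blast
          have oJ: "order (G\<lparr>carrier := J\<rparr>) = q ^ 1 * m'" using m' by (simp add: order_def)
          have finJ: "finite (carrier (G\<lparr>carrier := J\<rparr>))" using fin subgroup.subset[OF Js] finite_subset by auto
          obtain Y' where Y': "subgroup Y' (G\<lparr>carrier := J\<rparr>)" "card Y' = q ^ 1"
            using sylow_thm[OF q GJ.is_group oJ finJ] by blast
          have Y's: "subgroup Y' G" using incl_subgroup[OF Js Y'(1)] .
          have Y'J: "Y' \<subseteq> J" using Y'(1) subgroup.subset by fastforce
          have AY: "A \<inter> Y' = {\<one>}" using coprime_inter[OF fin As(1) Y's] As(2) Y'(2) cop by simp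
          have cAY: "card A * card Y' = order G" using As(2) Y'(2) ord by simp
          have "I \<subseteq> D"
          proof
            fix x assume x: "x \<in> I"
            have xc: "x \<in> carrier G" using x Ic by auto
            have "x \<in> cj G k P" if k: "k \<in> carrier G" for k
            proof -
              define w where "w = g \<otimes> inv k"
              have wc: "w \<in> carrier G" unfolding w_def using gc k by simp
              obtain a' y' where ay: "a' \<in> A" "y' \<in> Y'" "w = a' \<otimes> y'"
                using prod_decomp[OF fin As(1) Y's AY cAY wc] by blast
              have a'c: "a' \<in> carrier G" using ay Ac by auto
              have y'c: "y' \<in> carrier G" using ay Y'J Js subgroup.subset by blast
              have "cj G y' I = I" using ay(2) Y'J unfolding J_def by auto
              then have "y' \<otimes> x \<otimes> inv y' \<in> I" using cj_mem[OF x, of y'] by simp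
              then have "y' \<otimes> x \<otimes> inv y' \<in> A" unfolding I_def by simp
              then have "a' \<otimes> (y' \<otimes> x \<otimes> inv y') \<otimes> inv a' \<in> A" using ay(1) As(1)
                by (simp add: subgroup.m_closed subgroup.m_inv_closed)
              moreover have "a' \<otimes> (y' \<otimes> x \<otimes> inv y') \<otimes> inv a' = w \<otimes> x \<otimes> inv w"
                using ay(3) a'c y'c xc by (simp add: m_assoc inv_mult_group)
              ultimately have "w \<otimes> x \<otimes> inv w \<in> cj G g P" unfolding A_def by simp
              then have "inv g \<otimes> (w \<otimes> x \<otimes> inv w) \<otimes> g \<in> P"
                using cj_inv_mem[OF Pc gc] wc xc by simp
              moreover have "inv g \<otimes> (w \<otimes> x \<otimes> inv w) \<otimes> g = inv k \<otimes> x \<otimes> k"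
                unfolding w_def using gc k xc by (simp add: m_assoc inv_mult_group)
              ultimately have "inv k \<otimes> x \<otimes> k \<in> P" by simp
              then show ?thesis using cj_inv_mem[OF Pc k xc] by simp
            qed
            then show "x \<in> D" unfolding D_def using xc by auto
          qed
          then have "I = {\<one>}" using D1 one_I by auto
          then show False using I1 by simp
        qed
        then show ?thesis by simp
      qed
    qed
  qed
qed

end

context group begin

lemma nontriv_fix:
  assumes fin: "finite (carrier G)" and J: "subgroup J G" and cJ: "card J = p ^ t" and p: "Factorial_Ring.prime p"
    and M: "M \<subseteq> carrier G" and inv: "\<And>j m. j \<in> J \<Longrightarrow> m \<in> M \<Longrightarrow> j \<otimes> m \<otimes> inv j \<in> M"
    and one: "\<one> \<in> M" and pM: "p dvd card M"
  shows "\<exists>z \<in> M. z \<noteq> \<one> \<and> (\<forall>j \<in> J. j \<otimes> z = z \<otimes> j)"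
proof -
  define F where "F = {m \<in> M. \<forall>j \<in> J. j \<otimes> m = m \<otimes> j}"
  have "card M mod p = card F mod p" unfolding F_def by (rule conj_fix[OF fin J cJ p M inv])
  then have pF: "p dvd card F" using pM by (simp add: dvd_eq_mod_eq_0)
  have oneF: "\<one> \<in> F" unfolding F_def using one J subgroup.subset by fastforce
  have "finite M" using fin M finite_subset by blast
  then have finF: "finite F" unfolding F_def by simp
  have "card F \<noteq> 0" using oneF finF by (metis card_0_eq empty_iff)
  then have "card F \<ge> p" using pF by (simp add: dvd_imp_le)
  moreover have "p \<ge> 2" using prime_ge_2_nat[OF p] .
  ultimately have c2: "card F \<ge> 2" by linarith
  have "\<not> F \<subseteq> {\<one>}"
  proof
    assume "F \<subseteq> {\<one>}"
    then have "card F \<le> card {\<one>}" by (intro card_mono) auto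
    then show False using c2 by simp
  qed
  then show ?thesis unfolding F_def by blast
qed

lemma gen_comm:
  assumes fin: "finite (carrier G)" and Q: "subgroup Q G" and cQ: "card Q = q" and q: "Factorial_Ring.prime q"
    and x: "x \<in> Q" "x \<noteq> \<one>" and g: "g \<in> carrier G" and gx: "g \<otimes> x = x \<otimes> g"
  shows "\<forall>y \<in> Q. g \<otimes> y = y \<otimes> g"
proof -
  have Qc: "Q \<subseteq> carrier G" using Q subgroup.subset by blast
  have xc: "x \<in> carrier G" using x Qc by auto
  have gs: "subgroup (generate G {x}) G" using generate_is_subgroup xc by auto
  have gQ: "generate G {x} \<subseteq> Q" using generate_subgroup_incl[OF _ Q] x by auto
  have "card (generate G {x}) dvd card Q" using card_sub_dvd[OF fin gs Q gQ] .
  then have "card (generate G {x}) = 1 \<or> card (generate G {x}) = q" using cQ q by (simp add: prime_nat_iff)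
  moreover have "card (generate G {x}) \<noteq> 1"
  proof
    assume "card (generate G {x}) = 1"
    then have "generate G {x} = {\<one>}" using subgroup_card1 gs by blast
    moreover have "x \<in> generate G {x}" by (simp add: generate.incl)
    ultimately show False using x by simp
  qed
  moreover have "finite Q" using fin Qc finite_subset by blast
  ultimately have eq: "generate G {x} = Q" using card_subset_eq[OF _ gQ] cQ by (metis)
  have cs: "subgroup (centralizer G {g}) G" using centralizer_subgroup g by simp
  have "x \<in> centralizer G {g}" unfolding centralizer_def using xc gx by simp
  then have "generate G {x} \<subseteq> centralizer G {g}" using generate_subgroup_incl[OF _ cs] by simp
  then show ?thesis using eq unfolding centralizer_def by auto
qed

lemma conj_pow: assumes "g \<in> carrier G" "x \<in> carrier G"
  shows "(g \<otimes> x \<otimes> inv g) [^] (n::nat) = g \<otimes> (x [^] n) \<otimes> inv g"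
proof (induction n)
  case 0 then show ?case using assms by simp
next
  case (Suc n)
  then show ?case using assms by (simp add: m_assoc)
qed

lemma pow_sub_order: assumes fin: "finite (carrier G)" and R: "subgroup R G" and r: "r \<in> R"
  shows "r [^] card R = \<one>"
proof -
  interpret GR: group "G\<lparr>carrier := R\<rparr>" using subgroup_imp_group R by blast
  have "r [^]\<^bsub>G\<lparr>carrier := R\<rparr>\<^esub> order (G\<lparr>carrier := R\<rparr>) = \<one>\<^bsub>G\<lparr>carrier := R\<rparr>\<^esub>"
    using GR.pow_order_eq_1 r by simp
  then show ?thesis by (simp add: order_def nat_pow_consistent[symmetric])
qed

lemma coprime_pow_one: assumes x: "x \<in> carrier G" and a: "x [^] (a::nat) = \<one>" and b: "x [^] (b::nat) = \<one>"
  and cop: "coprime a b" shows "x = \<one>"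
proof -
  have "ord x dvd a" "ord x dvd b" using pow_eq_id[OF x] a b by auto
  then have "ord x = 1" using cop by (meson coprime_common_divisor_nat)
  then show ?thesis using ord_eq_1[OF x] by simp
qed

lemma unique_normal: assumes fin: "finite (carrier G)" and Q: "subgroup Q G" "card Q = q"
  and uniq: "\<forall>Q'. subgroup Q' G \<and> card Q' = q \<longrightarrow> Q' = Q" shows "Q \<lhd> G"
  unfolding normal_inv_iff
proof (intro conjI ballI)
  show "subgroup Q G" by (rule Q(1))
  fix x h assume x: "x \<in> carrier G" and h: "h \<in> Q"
  have Qc: "Q \<subseteq> carrier G" using Q subgroup.subset by blast
  have "subgroup (cj G x Q) G \<and> card (cj G x Q) = q" using cj_subgroup[OF Q(1) x] cj_card[OF Qc x] Q(2) by simp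
  then have "cj G x Q = Q" using uniq by blast
  then show "x \<otimes> h \<otimes> inv x \<in> Q" using cj_mem[OF h, of x] by simp
qed

end

locale mgrp = group +
  fixes p q k :: nat and N
  assumes fin: "finite (carrier G)" and pp: "Factorial_Ring.prime p" and qp: "Factorial_Ring.prime q"
    and pq: "p < q" and k1: "k \<ge> 1" and ord: "order G = q * p ^ k"
    and ms: "mstar G = order G" and mn: "minimal_normal N G"
begin

lemma p2: "p \<ge> 2" using prime_ge_2_nat[OF pp] .
lemma q2: "q \<ge> 2" using prime_ge_2_nat[OF qp] .
lemma pneq: "p \<noteq> q" using pq by simp
lemma cop: "coprime (p ^ i) q" using coprime_primes_pow[OF pp qp pneq] .

lemma mcond: assumes H: "subgroup H G" shows "card H * card (centralizer G H) \<le> order G"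
proof -
  have "mG G H \<in> {mG G H | H. subgroup H G}" using H by blast
  moreover have "finite {mG G H | H. subgroup H G}"
  proof (rule finite_subset)
    show "{mG G H | H. subgroup H G} \<subseteq> mG G ` Pow (carrier G)" using subgroup.subset by blast
    show "finite (mG G ` Pow (carrier G))" using fin by simp
  qed
  ultimately have "mG G H \<le> mstar G" unfolding mstar_def by (rule Max_ge[rotated])
  then show ?thesis using ms unfolding mG_def by simp
qed

lemma Zc: "centralizer G (carrier G) = {\<one>}"
proof -
  have "card (carrier G) * card (centralizer G (carrier G)) \<le> order G" using mcond subgroup_self by blast
  moreover have "order G > 0" using ord q2 p2 by simp
  ultimately have "card (centralizer G (carrier G)) \<le> 1" unfolding order_def by simp
  moreover have "\<one> \<in> centralizer G (carrier G)" unfolding centralizer_def by simp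
  moreover have "finite (centralizer G (carrier G))" using fin unfolding centralizer_def by simp
  ultimately have "\<forall>a\<in>centralizer G (carrier G). \<forall>b\<in>centralizer G (carrier G). a = b"
    using card_le_Suc0_iff_eq by (metis One_nat_def)
  then show ?thesis using \<open>\<one> \<in> centralizer G (carrier G)\<close> by blast
qed

lemma zlem:
  assumes z: "z \<in> carrier G" and P: "subgroup P G" "card P = p ^ k" and Xq: "subgroup Xq G" "card Xq = q"
    and zP: "\<forall>y \<in> P. z \<otimes> y = y \<otimes> z" and zX: "\<forall>y \<in> Xq. z \<otimes> y = y \<otimes> z"
  shows "z = \<one>"
proof -
  define K where "K = centralizer G {z}"
  have Ks: "subgroup K G" unfolding K_def using centralizer_subgroup z by simp
  have PK: "P \<subseteq> K" unfolding K_def centralizer_def using zP P(1) subgroup.subset by fastforce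
  have XqK: "Xq \<subseteq> K" unfolding K_def centralizer_def using zX Xq(1) subgroup.subset by fastforce
  have "p ^ k dvd card K" using card_sub_dvd[OF fin P(1) Ks PK] P(2) by simp
  moreover have "q dvd card K" using card_sub_dvd[OF fin Xq(1) Ks XqK] Xq(2) by simp
  ultimately have "q * p ^ k dvd card K" using cop by (simp add: coprime_commute divides_mult)
  moreover have "card K dvd q * p ^ k" using card_subgroup_dvd[OF fin Ks] ord by simp
  ultimately have "card K = card (carrier G)" using ord unfolding order_def by (simp add: dvd_antisym)
  then have "K = carrier G" using card_subset_eq[OF fin] Ks subgroup.subset by blast
  then have "\<forall>h\<in>carrier G. h \<otimes> z = z \<otimes> h" unfolding K_def centralizer_def by blast
  then have "z \<in> centralizer G (carrier G)" unfolding centralizer_def using z by auto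
  then show ?thesis using Zc by simp
qed

lemma noQ0: assumes Q: "Q \<lhd> G" and cQ: "card Q = q" shows False
proof -
  have Qs: "subgroup Q G" using Q normal_imp_subgroup by blast
  have Qc: "Q \<subseteq> carrier G" using Qs subgroup.subset by blast
  have "\<not> Q \<subseteq> {\<one>}"
  proof
    assume "Q \<subseteq> {\<one>}"
    then have "card Q \<le> card {\<one>}" by (intro card_mono) auto
    then have "card Q \<le> 1" by simp
    then show False using cQ q2 by simp
  qed
  then obtain x where x: "x \<in> Q" "x \<noteq> \<one>" by blast
  have xc: "x \<in> carrier G" using x Qc by auto
  interpret ga: group_action G "carrier G" "\<lambda>g. (\<lambda>h \<in> carrier G. g \<otimes> h \<otimes> inv g)"
    by (rule action_by_conjugation)
  have os: "card (orbit G (\<lambda>g. (\<lambda>h \<in> carrier G. g \<otimes> h \<otimes> inv g)) x) * card (stabilizer G (\<lambda>g. (\<lambda>h \<in> carrier G. g \<otimes> h \<otimes> inv g)) x) = order G"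
    by (rule ga.orbit_stabilizer_theorem[OF xc])
  have orb: "orbit G (\<lambda>g. (\<lambda>h \<in> carrier G. g \<otimes> h \<otimes> inv g)) x \<subseteq> Q - {\<one>}"
  proof
    fix y assume "y \<in> orbit G (\<lambda>g. (\<lambda>h \<in> carrier G. g \<otimes> h \<otimes> inv g)) x"
    then obtain g where g: "g \<in> carrier G" "y = g \<otimes> x \<otimes> inv g" unfolding orbit_def using xc by auto
    have "y \<in> Q" using g x Q normal_inv_iff by blast
    moreover have "y \<noteq> \<one>"
    proof
      assume "y = \<one>"
      then have "inv g \<otimes> (g \<otimes> x \<otimes> inv g) \<otimes> g = inv g \<otimes> \<one> \<otimes> g" using g by simp
      then show False using g xc x by (simp add: m_assoc)
    qed
    ultimately show "y \<in> Q - {\<one>}" by simp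
  qed
  have finQ: "finite Q" using fin Qc finite_subset by blast
  have "card (orbit G (\<lambda>g. (\<lambda>h \<in> carrier G. g \<otimes> h \<otimes> inv g)) x) \<le> card (Q - {\<one>})"
    using card_mono[OF _ orb] finQ by simp
  also have "\<dots> = q - 1" using cQ subgroup.one_closed[OF Qs] finQ by (simp add: card_Diff_singleton)
  finally have o1: "card (orbit G (\<lambda>g. (\<lambda>h \<in> carrier G. g \<otimes> h \<otimes> inv g)) x) \<le> q - 1" .
  have stab: "stabilizer G (\<lambda>g. (\<lambda>h \<in> carrier G. g \<otimes> h \<otimes> inv g)) x \<subseteq> centralizer G Q"
  proof
    fix g assume "g \<in> stabilizer G (\<lambda>g. (\<lambda>h \<in> carrier G. g \<otimes> h \<otimes> inv g)) x"
    then have g: "g \<in> carrier G" "g \<otimes> x \<otimes> inv g = x" unfolding stabilizer_def using xc by auto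
    then have "g \<otimes> x = x \<otimes> g" by (metis inv_closed l_one m_assoc m_closed r_inv r_one xc)
    then have "\<forall>y \<in> Q. g \<otimes> y = y \<otimes> g" using gen_comm[OF fin Qs cQ qp x g(1)] by blast
    then show "g \<in> centralizer G Q" unfolding centralizer_def using g by auto
  qed
  have "card (centralizer G Q) \<le> p ^ k"
  proof -
    have "q * card (centralizer G Q) \<le> q * p ^ k" using mcond[OF Qs] cQ ord by simp
    then show ?thesis using q2 by simp
  qed
  moreover have "card (stabilizer G (\<lambda>g. (\<lambda>h \<in> carrier G. g \<otimes> h \<otimes> inv g)) x) \<le> card (centralizer G Q)"
    using card_mono[OF _ stab] fin unfolding centralizer_def by simp
  ultimately have b: "card (stabilizer G (\<lambda>g. (\<lambda>h \<in> carrier G. g \<otimes> h \<otimes> inv g)) x) \<le> p ^ k" by linarith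
  have "card (orbit G (\<lambda>g. (\<lambda>h \<in> carrier G. g \<otimes> h \<otimes> inv g)) x) * card (stabilizer G (\<lambda>g. (\<lambda>h \<in> carrier G. g \<otimes> h \<otimes> inv g)) x) \<le> (q - 1) * p ^ k"
    by (rule mult_le_mono[OF o1 b])
  then have "q * p ^ k \<le> (q - 1) * p ^ k" using os ord by simp
  then show False using q2 p2 by simp
qed

end

context group begin

lemma normalI':
  assumes "M \<subseteq> carrier G" "\<one> \<in> M" "\<And>a b. a \<in> M \<Longrightarrow> b \<in> M \<Longrightarrow> a \<otimes> b \<in> M"
    "\<And>a. a \<in> M \<Longrightarrow> inv a \<in> M" "\<And>g a. g \<in> carrier G \<Longrightarrow> a \<in> M \<Longrightarrow> g \<otimes> a \<otimes> inv g \<in> M"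
  shows "M \<lhd> G"
  unfolding normal_inv_iff
proof (intro conjI ballI)
  show "subgroup M G" by (rule subgroupI) (use assms in auto)
  show "\<And>x h. x \<in> carrier G \<Longrightarrow> h \<in> M \<Longrightarrow> x \<otimes> h \<otimes> inv x \<in> M" by (rule assms(5))
qed

lemma normal_conj: assumes "A \<lhd> G" "x \<in> carrier G" "h \<in> A" shows "x \<otimes> h \<otimes> inv x \<in> A"
  using assms normal_inv_iff by blast

lemma comm_normal:
  assumes A: "A \<lhd> G" and B: "B \<lhd> G" and AB: "A \<inter> B = {\<one>}" and a: "a \<in> A" and b: "b \<in> B"
  shows "a \<otimes> b = b \<otimes> a"
proof -
  have Ac: "A \<subseteq> carrier G" using A normal_imp_subgroup subgroup.subset by blast
  have Bc: "B \<subseteq> carrier G" using B normal_imp_subgroup subgroup.subset by blast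
  have ac: "a \<in> carrier G" and bc: "b \<in> carrier G" using a b Ac Bc by auto
  have As: "subgroup A G" and Bs: "subgroup B G" using A B normal_imp_subgroup by auto
  have "a \<otimes> b \<otimes> inv a \<in> B" using normal_conj[OF B ac b] .
  then have c1: "a \<otimes> b \<otimes> inv a \<otimes> inv b \<in> B" using Bs b by (simp add: subgroup.m_closed subgroup.m_inv_closed)
  have "inv a \<in> A" using subgroup.m_inv_closed[OF As a] .
  then have "b \<otimes> inv a \<otimes> inv b \<in> A" using normal_conj[OF A bc] by blast
  then have "a \<otimes> (b \<otimes> inv a \<otimes> inv b) \<in> A" using As a by (simp add: subgroup.m_closed)
  then have c2: "a \<otimes> b \<otimes> inv a \<otimes> inv b \<in> A" using ac bc by (simp add: m_assoc)
  have "a \<otimes> b \<otimes> inv a \<otimes> inv b = \<one>" using c1 c2 AB by auto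
  then have "a \<otimes> b \<otimes> inv a \<otimes> inv b \<otimes> b \<otimes> a = b \<otimes> a" using ac bc by simp
  then show ?thesis using ac bc by (simp add: m_assoc)
qed

lemma sub_of_card:
  assumes fin: "finite (carrier G)" and S: "subgroup S G" and q: "Factorial_Ring.prime q" and d: "q dvd card S"
  shows "\<exists>Xq. subgroup Xq G \<and> Xq \<subseteq> S \<and> card Xq = q"
proof -
  interpret GS: group "G\<lparr>carrier := S\<rparr>" using subgroup_imp_group S by blast
  obtain m where m: "card S = q * m" using d by blast
  have oS: "order (G\<lparr>carrier := S\<rparr>) = q ^ 1 * m" using m by (simp add: order_def)
  have finS: "finite (carrier (G\<lparr>carrier := S\<rparr>))" using fin subgroup.subset[OF S] finite_subset by auto
  obtain Xq where Xq: "subgroup Xq (G\<lparr>carrier := S\<rparr>)" "card Xq = q ^ 1"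
    using sylow_thm[OF q GS.is_group oS finS] by blast
  have "subgroup Xq G" using incl_subgroup[OF S Xq(1)] .
  moreover have "Xq \<subseteq> S" using Xq(1) subgroup.subset by fastforce
  ultimately show ?thesis using Xq(2) by auto
qed

end

context mgrp begin

lemma Nn: "N \<lhd> G" "N \<noteq> {\<one>}" "\<And>M. M \<lhd> G \<Longrightarrow> M \<subseteq> N \<Longrightarrow> M = {\<one>} \<or> M = N"
  using mn unfolding minimal_normal_def by auto

lemma Ns: "subgroup N G" using Nn(1) normal_imp_subgroup by blast
lemma Nc: "N \<subseteq> carrier G" using Ns subgroup.subset by blast
lemma finN: "finite N" using fin Nc finite_subset by blast

lemma sylP: "\<exists>P. subgroup P G \<and> card P = p ^ k"
proof -
  have "order G = p ^ k * q" using ord by (simp add: mult.commute)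
  then show ?thesis using sylow_thm[OF pp is_group _ fin] by blast
qed

lemma card_ne1: assumes "subgroup M G" "M \<noteq> {\<one>}" shows "card M \<noteq> 1"
  using subgroup_card1 assms by blast

lemma Np: "\<exists>n \<ge> 1. card N = p ^ n"
proof -
  obtain P where P: "subgroup P G" "card P = p ^ k" using sylP by blast
  have nq: "\<not> q dvd card N"
  proof
    assume "q dvd card N"
    then obtain Xq where Xq: "subgroup Xq G" "Xq \<subseteq> N" "card Xq = q" using sub_of_card[OF fin Ns qp] by blast
    have "(\<exists>Q0. subgroup Q0 G \<and> card Q0 = q \<and> (\<forall>Q'. subgroup Q' G \<and> card Q' = q \<longrightarrow> Q' = Q0))
       \<or> (\<exists>M. M \<lhd> G \<and> M \<noteq> {\<one>} \<and> (\<exists>j. card M = p ^ j))"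
      by (rule not_simple[OF fin pp qp pneq ord k1])
    then show False
    proof
      assume "\<exists>Q0. subgroup Q0 G \<and> card Q0 = q \<and> (\<forall>Q'. subgroup Q' G \<and> card Q' = q \<longrightarrow> Q' = Q0)"
      then obtain Q0 where "subgroup Q0 G" "card Q0 = q" "\<forall>Q'. subgroup Q' G \<and> card Q' = q \<longrightarrow> Q' = Q0" by blast
      then show False using unique_normal[OF fin] noQ0 by blast
    next
      assume "\<exists>M. M \<lhd> G \<and> M \<noteq> {\<one>} \<and> (\<exists>j. card M = p ^ j)"
      then obtain M j where M: "M \<lhd> G" "M \<noteq> {\<one>}" "card M = p ^ j" by blast
      have Ms: "subgroup M G" using M(1) normal_imp_subgroup by blast
      have Mc: "M \<subseteq> carrier G" using Ms subgroup.subset by blast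
      have "N \<inter> M \<lhd> G" using normal_subgroup_intersect[OF Nn(1) M(1)] .
      then have "N \<inter> M = {\<one>} \<or> N \<inter> M = N" using Nn(3) by blast
      then show False
      proof
        assume "N \<inter> M = N"
        then have "N \<subseteq> M" by auto
        then have "card N dvd p ^ j" using card_sub_dvd[OF fin Ns Ms] M(3) by simp
        then have "q dvd p ^ j" using \<open>q dvd card N\<close> by (meson dvd_trans)
        then have "q dvd p" using qp prime_dvd_power by blast
        then show False using pp qp pneq by (metis prime_nat_iff prime_gt_1_nat less_irrefl)
      next
        assume NM: "N \<inter> M = {\<one>}"
        have j: "j \<noteq> 0" using card_ne1[OF Ms M(2)] M(3) by auto
        have "p dvd card M" using M(3) j by simp
        moreover have "\<one> \<in> M" using Ms subgroup.one_closed by blast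
        moreover have "\<And>a m. a \<in> P \<Longrightarrow> m \<in> M \<Longrightarrow> a \<otimes> m \<otimes> inv a \<in> M"
          using normal_conj[OF M(1)] P(1) subgroup.subset by blast
        ultimately obtain z where z: "z \<in> M" "z \<noteq> \<one>" "\<forall>a \<in> P. a \<otimes> z = z \<otimes> a"
          using nontriv_fix[OF fin P(1) P(2) pp Mc] by blast
        have zc: "z \<in> carrier G" using z Mc by auto
        have "\<forall>y \<in> Xq. z \<otimes> y = y \<otimes> z"
          using comm_normal[OF Nn(1) M(1) NM] Xq(2) z(1) by (metis subsetD)
        moreover have "\<forall>y \<in> P. z \<otimes> y = y \<otimes> z" using z(3) by auto
        ultimately have "z = \<one>" using zlem[OF zc P(1) P(2) Xq(1) Xq(3)] by blast
        then show False using z(2) by simp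
      qed
    qed
  qed
  have "card N dvd q * p ^ k" using card_subgroup_dvd[OF fin Ns] ord by simp
  then obtain n where n: "card N = p ^ n" using dvd_q_ppow[OF pp qp pneq _ nq] by blast
  have "n \<noteq> 0" using card_ne1[OF Ns Nn(2)] n by auto
  then have "n \<ge> 1" by simp
  then show ?thesis using n by blast
qed

end

context group begin

lemma conj_comm: assumes g: "g \<in> carrier G" and c: "c \<in> carrier G" and h: "h \<in> carrier G"
  and eq: "c \<otimes> h = h \<otimes> c"
  shows "(g \<otimes> c \<otimes> inv g) \<otimes> (g \<otimes> h \<otimes> inv g) = (g \<otimes> h \<otimes> inv g) \<otimes> (g \<otimes> c \<otimes> inv g)"
proof -
  have "(g \<otimes> c \<otimes> inv g) \<otimes> (g \<otimes> h \<otimes> inv g) = g \<otimes> (c \<otimes> h) \<otimes> inv g" using g c h by (simp add: m_assoc)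
  also have "\<dots> = g \<otimes> (h \<otimes> c) \<otimes> inv g" using eq by simp
  also have "\<dots> = (g \<otimes> h \<otimes> inv g) \<otimes> (g \<otimes> c \<otimes> inv g)" using g c h by (simp add: m_assoc)
  finally show ?thesis .
qed

lemma cent_normal: assumes H: "H \<lhd> G" shows "centralizer G H \<lhd> G"
  unfolding normal_inv_iff
proof (intro conjI ballI)
  have Hc: "H \<subseteq> carrier G" using H normal_imp_subgroup subgroup.subset by blast
  show "subgroup (centralizer G H) G" using centralizer_subgroup[OF Hc] .
  fix x c assume x: "x \<in> carrier G" and c: "c \<in> centralizer G H"
  have cc: "c \<in> carrier G" and cH: "\<forall>h\<in>H. c \<otimes> h = h \<otimes> c" using c unfolding centralizer_def by auto
  have "(x \<otimes> c \<otimes> inv x) \<otimes> h = h \<otimes> (x \<otimes> c \<otimes> inv x)" if h: "h \<in> H" for h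
  proof -
    have hc: "h \<in> carrier G" using h Hc by auto
    define h' where "h' = inv x \<otimes> h \<otimes> inv (inv x)"
    have h'H: "h' \<in> H" unfolding h'_def using normal_conj[OF H inv_closed[OF x] h] .
    have h'c: "h' \<in> carrier G" using h'H Hc by auto
    have hh: "h = x \<otimes> h' \<otimes> inv x" unfolding h'_def using x hc by (simp add: m_assoc)
    show ?thesis unfolding hh using conj_comm[OF x cc h'c] cH h'H by simp
  qed
  then show "x \<otimes> c \<otimes> inv x \<in> centralizer G H" unfolding centralizer_def using x cc by simp
qed

end

context mgrp begin

lemma Nab: "\<forall>x \<in> N. \<forall>y \<in> N. x \<otimes> y = y \<otimes> x"
proof -
  obtain n where n: "n \<ge> 1" "card N = p ^ n" using Np by blast
  define ZN where "ZN = N \<inter> centralizer G N"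
  have ZNn: "ZN \<lhd> G" unfolding ZN_def using normal_subgroup_intersect[OF Nn(1) cent_normal[OF Nn(1)]] .
  have "p dvd card N" using n by (simp add: dvd_power)
  moreover have "\<one> \<in> N" using Ns subgroup.one_closed by blast
  moreover have "\<And>a m. a \<in> N \<Longrightarrow> m \<in> N \<Longrightarrow> a \<otimes> m \<otimes> inv a \<in> N" using normal_conj[OF Nn(1)] Nc by blast
  ultimately obtain z where z: "z \<in> N" "z \<noteq> \<one>" "\<forall>a \<in> N. a \<otimes> z = z \<otimes> a"
    using nontriv_fix[OF fin Ns n(2) pp Nc] by blast
  have "z \<in> ZN" unfolding ZN_def centralizer_def using z Nc by auto
  then have "ZN \<noteq> {\<one>}" using z by auto
  moreover have "ZN \<subseteq> N" unfolding ZN_def by auto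
  ultimately have "ZN = N" using Nn(3)[OF ZNn] by blast
  then show ?thesis unfolding ZN_def centralizer_def by auto
qed

lemma Nexp: "\<forall>x \<in> N. x [^] p = \<one>"
proof -
  obtain n where n: "n \<ge> 1" "card N = p ^ n" using Np by blast
  define Om where "Om = {x \<in> N. x [^] p = \<one>}"
  have Omn: "Om \<lhd> G"
  proof (rule normalI')
    show "Om \<subseteq> carrier G" unfolding Om_def using Nc by auto
    show "\<one> \<in> Om" unfolding Om_def using Ns subgroup.one_closed by auto
    fix a b assume a: "a \<in> Om" and b: "b \<in> Om"
    have ac: "a \<in> carrier G" and bc: "b \<in> carrier G" using a b Nc unfolding Om_def by auto
    have "(a \<otimes> b) [^] p = a [^] p \<otimes> b [^] p" using pow_mult_distrib Nab a b ac bc unfolding Om_def by auto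
    then show "a \<otimes> b \<in> Om" using a b Ns unfolding Om_def by (simp add: subgroup.m_closed)
  next
    fix a assume a: "a \<in> Om"
    have ac: "a \<in> carrier G" using a Nc unfolding Om_def by auto
    have "inv a [^] p = inv (a [^] p)" using nat_pow_inv[OF ac] .
    then show "inv a \<in> Om" using a Ns unfolding Om_def by (simp add: subgroup.m_inv_closed)
  next
    fix g a assume g: "g \<in> carrier G" and a: "a \<in> Om"
    have ac: "a \<in> carrier G" using a Nc unfolding Om_def by auto
    have "(g \<otimes> a \<otimes> inv g) [^] p = g \<otimes> a [^] p \<otimes> inv g" using conj_pow[OF g ac] .
    then show "g \<otimes> a \<otimes> inv g \<in> Om" using a g normal_conj[OF Nn(1) g] unfolding Om_def by simp
  qed
  have "p dvd card N" using n by (simp add: dvd_power)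
  then obtain Y0 where Y0: "subgroup Y0 G" "Y0 \<subseteq> N" "card Y0 = p" using sub_of_card[OF fin Ns pp] by blast
  have "\<not> Y0 \<subseteq> {\<one>}"
  proof
    assume "Y0 \<subseteq> {\<one>}"
    then have "card Y0 \<le> card {\<one>}" by (intro card_mono) auto
    then show False using Y0(3) p2 by simp
  qed
  then obtain y where y: "y \<in> Y0" "y \<noteq> \<one>" by blast
  have "y [^] p = \<one>" using pow_sub_order[OF fin Y0(1) y(1)] Y0(3) by simp
  then have "y \<in> Om" unfolding Om_def using y Y0(2) by auto
  then have "Om \<noteq> {\<one>}" using y by auto
  moreover have "Om \<subseteq> N" unfolding Om_def by auto
  ultimately have "Om = N" using Nn(3)[OF Omn] by blast
  then show ?thesis unfolding Om_def by auto
qed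

abbreviation "C \<equiv> centralizer G N"

lemma Cn: "C \<lhd> G" using cent_normal[OF Nn(1)] .
lemma Cs: "subgroup C G" using Cn normal_imp_subgroup by blast
lemma Cc: "C \<subseteq> carrier G" using Cs subgroup.subset by blast
lemma NC: "N \<subseteq> C" unfolding centralizer_def using Nab Nc by auto

lemma Cp: "\<exists>c. card C = p ^ c"
proof -
  obtain P where P: "subgroup P G" "card P = p ^ k" using sylP by blast
  obtain n where n: "n \<ge> 1" "card N = p ^ n" using Np by blast
  have nq: "\<not> q dvd card C"
  proof
    assume "q dvd card C"
    then obtain Xq where Xq: "subgroup Xq G" "Xq \<subseteq> C" "card Xq = q" using sub_of_card[OF fin Cs qp] by blast
    have "p dvd card N" using n by (simp add: dvd_power)
    moreover have "\<one> \<in> N" using Ns subgroup.one_closed by blast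
    moreover have "\<And>a m. a \<in> P \<Longrightarrow> m \<in> N \<Longrightarrow> a \<otimes> m \<otimes> inv a \<in> N" using normal_conj[OF Nn(1)] P(1) subgroup.subset by blast
    ultimately obtain z where z: "z \<in> N" "z \<noteq> \<one>" "\<forall>a \<in> P. a \<otimes> z = z \<otimes> a"
      using nontriv_fix[OF fin P(1) P(2) pp Nc] by blast
    have zc: "z \<in> carrier G" using z Nc by auto
    have "\<forall>y \<in> Xq. z \<otimes> y = y \<otimes> z" using Xq(2) z(1) unfolding centralizer_def by fastforce
    moreover have "\<forall>y \<in> P. z \<otimes> y = y \<otimes> z" using z(3) by auto
    ultimately have "z = \<one>" using zlem[OF zc P(1) P(2) Xq(1) Xq(3)] by blast
    then show False using z(2) by simp
  qed
  have "card C dvd q * p ^ k" using card_subgroup_dvd[OF fin Cs] ord by simp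
  then show ?thesis using dvd_q_ppow[OF pp qp pneq _ nq] by blast
qed

lemma Hord: "order (G Mod C) * card C = order G"
proof -
  have "card (rcosets C) * card C = order G" using lagrange[OF Cs] .
  moreover have "carrier (G Mod C) = rcosets C" unfolding FactGroup_def by simp
  ultimately show ?thesis unfolding order_def by simp
qed

end

context mgrp begin

lemma Cpos: "card C > 0" using Cs subgroup.one_closed fin Cc finite_subset card_gt_0_iff by blast

lemma Hr: "\<exists>r \<ge> 1. order (G Mod C) = q * p ^ r"
proof -
  obtain c where c: "card C = p ^ c" using Cp by blast
  have eq: "order (G Mod C) * p ^ c = q * p ^ k" using Hord c ord by simp
  have "p ^ c dvd q * p ^ k" using eq by (metis dvd_triv_right)
  moreover have "coprime (p ^ c) q" using cop .
  ultimately have "p ^ c dvd p ^ k" by (metis coprime_dvd_mult_right_iff)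
  then obtain i where i: "i \<le> k" "p ^ c = p ^ i" using pp by (auto simp: divides_primepow_nat)
  have ck: "c \<le> k" using i p2 by (metis power_inject_exp Suc_1 Suc_le_eq)
  have pk: "p ^ k = p ^ (k - c) * p ^ c" using ck by (simp add: power_add[symmetric])
  have "order (G Mod C) * p ^ c = (q * p ^ (k - c)) * p ^ c" using eq pk by (simp add: mult.assoc)
  moreover have "p ^ c \<noteq> 0" using p2 by simp
  ultimately have ordH: "order (G Mod C) = q * p ^ (k - c)" by (meson mult_right_cancel)
  have "c \<noteq> k"
  proof
    assume ck': "c = k"
    define Z' where "Z' = centralizer G C"
    have Z'n: "Z' \<lhd> G" unfolding Z'_def using cent_normal[OF Cn] .
    have Z's: "subgroup Z' G" using Z'n normal_imp_subgroup by blast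
    have Z'c: "Z' \<subseteq> carrier G" using Z's subgroup.subset by blast
    have cC: "card C = p ^ k" using c ck' by simp
    have "card C * card Z' \<le> q * p ^ k" using mcond[OF Cs] ord unfolding Z'_def by simp
    then have Zq: "card Z' \<le> q" using cC p2 by simp
    have o2: "order G = q ^ 1 * p ^ k" using ord by simp
    obtain Xq where Xq0: "subgroup Xq G" "card Xq = q ^ 1" using sylow_thm[OF qp is_group o2 fin] by blast
    have Xq: "subgroup Xq G" "card Xq = q" using Xq0 by simp_all
    have "card Z' mod q = card {z \<in> Z'. \<forall>j \<in> Xq. j \<otimes> z = z \<otimes> j} mod q"
      by (rule conj_fix[OF fin Xq0(1) Xq0(2) qp Z'c]) (use normal_conj[OF Z'n] Xq(1) subgroup.subset in blast)
    moreover have "{z \<in> Z'. \<forall>j \<in> Xq. j \<otimes> z = z \<otimes> j} = {\<one>}"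
    proof
      show "{z \<in> Z'. \<forall>j \<in> Xq. j \<otimes> z = z \<otimes> j} \<subseteq> {\<one>}"
      proof
        fix z assume z: "z \<in> {z \<in> Z'. \<forall>j \<in> Xq. j \<otimes> z = z \<otimes> j}"
        have zc: "z \<in> carrier G" using z Z'c by auto
        have "\<forall>y \<in> C. z \<otimes> y = y \<otimes> z" using z unfolding Z'_def centralizer_def by auto
        moreover have "\<forall>y \<in> Xq. z \<otimes> y = y \<otimes> z" using z by auto
        ultimately have "z = \<one>" using zlem[OF zc Cs cC Xq] by blast
        then show "z \<in> {\<one>}" by simp
      qed
      show "{\<one>} \<subseteq> {z \<in> Z'. \<forall>j \<in> Xq. j \<otimes> z = z \<otimes> j}"
        using Z's subgroup.one_closed Xq(1) subgroup.subset by fastforce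
    qed
    ultimately have Zmod: "card Z' mod q = 1" using q2 by simp
    have "p dvd card C" using cC k1 by (simp add: dvd_power)
    moreover have "\<one> \<in> C" using Cs subgroup.one_closed by blast
    moreover have "\<And>a m. a \<in> C \<Longrightarrow> m \<in> C \<Longrightarrow> a \<otimes> m \<otimes> inv a \<in> C"
      using Cs by (simp add: subgroup.m_closed subgroup.m_inv_closed)
    ultimately obtain z where z: "z \<in> C" "z \<noteq> \<one>" "\<forall>a \<in> C. a \<otimes> z = z \<otimes> a"
      using nontriv_fix[OF fin Cs cC pp Cc] by blast
    have "\<forall>h \<in> C. z \<otimes> h = h \<otimes> z" using z(3) by auto
    then have "z \<in> Z'" unfolding Z'_def centralizer_def using z(1) Cc by blast
    moreover have "\<one> \<in> Z'" using Z's subgroup.one_closed by blast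
    moreover have "finite Z'" using fin Z'c finite_subset by blast
    ultimately have "card {\<one>, z} \<le> card Z'" by (intro card_mono) auto
    then have "card Z' \<ge> 2" using z(2) by simp
    then show False using Zq Zmod
      by (metis le_neq_implies_less mod_less mod_self nat_neq_iff one_neq_zero numeral_le_one_iff semiring_norm(69) less_le_trans)
  qed
  then have "k - c \<ge> 1" using ck by simp
  then show ?thesis using ordH by blast
qed

lemma pn_lt: assumes n: "card N = p ^ n" and r: "order (G Mod C) = q * p ^ r" shows "p ^ n < q * p ^ r"
proof -
  have "card N * card C \<le> order (G Mod C) * card C" using mcond[OF Ns] Hord by simp
  then have le: "card N \<le> order (G Mod C)" using Cpos by simp
  have "p ^ n \<noteq> q * p ^ r"
  proof
    assume "p ^ n = q * p ^ r"
    then have "q dvd p ^ n" by simp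
    then have "q dvd p" using qp prime_dvd_power by blast
    then show False using pp qp pneq by (metis prime_nat_iff prime_gt_1_nat less_irrefl)
  qed
  then show ?thesis using le n r by simp
qed

end

context mgrp begin

abbreviation "Hq \<equiv> G Mod C"

lemma Hgrp: "group Hq" using normal.factorgroup_is_group[OF Cn] .
lemma carrH: "carrier Hq = rcosets C" unfolding FactGroup_def by simp
lemma finH: "finite (carrier Hq)"
  unfolding carrH using rcosets_subset_PowG[OF Cs] fin by (simp add: finite_subset)

lemma conj_C: assumes c: "c \<in> C" and m: "m \<in> N" shows "c \<otimes> m \<otimes> inv c = m"
proof -
  have cc: "c \<in> carrier G" using c Cc by auto
  have mc: "m \<in> carrier G" using m Nc by auto
  have "c \<otimes> m = m \<otimes> c" using c m unfolding centralizer_def by auto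
  then show ?thesis using cc mc by (simp add: m_assoc)
qed

lemma cosetE: assumes "Y \<in> carrier Hq" obtains g where "g \<in> carrier G" "Y = C #> g"
  using assms unfolding carrH RCOSETS_def by auto

lemma coset_conj_eq: assumes Y: "Y \<in> carrier Hq" and g: "g \<in> Y" and n: "n \<in> N"
  and g0: "g0 \<in> carrier G" and Yg0: "Y = C #> g0"
  shows "g \<otimes> n \<otimes> inv g = g0 \<otimes> n \<otimes> inv g0"
proof -
  obtain c where c: "c \<in> C" "g = c \<otimes> g0" using g Yg0 unfolding r_coset_def by auto
  have cc: "c \<in> carrier G" using c Cc by auto
  have nc: "n \<in> carrier G" using n Nc by auto
  have m: "g0 \<otimes> n \<otimes> inv g0 \<in> N" using normal_conj[OF Nn(1) g0 n] .
  have "g \<otimes> n \<otimes> inv g = c \<otimes> (g0 \<otimes> n \<otimes> inv g0) \<otimes> inv c"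
    using c(2) cc g0 nc by (simp add: m_assoc inv_mult_group)
  also have "\<dots> = g0 \<otimes> n \<otimes> inv g0" using conj_C[OF c(1) m] .
  finally show ?thesis .
qed

lemma coset_conj_eq2: assumes Y: "Y \<in> carrier Hq" and g: "g \<in> Y" and g': "g' \<in> Y" and n: "n \<in> N"
  shows "g \<otimes> n \<otimes> inv g = g' \<otimes> n \<otimes> inv g'"
proof -
  obtain g0 where g0: "g0 \<in> carrier G" "Y = C #> g0" using cosetE[OF Y] by blast
  show ?thesis using coset_conj_eq[OF Y g n g0] coset_conj_eq[OF Y g' n g0] by simp
qed

definition rep :: "'a set \<Rightarrow> 'a" where "rep Y = (SOME g. g \<in> Y)"

lemma rep_in: assumes Y: "Y \<in> carrier Hq" shows "rep Y \<in> Y"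
proof -
  obtain g0 where g0: "g0 \<in> carrier G" "Y = C #> g0" using cosetE[OF Y] by blast
  have "g0 \<in> Y" using g0 rcos_self[OF g0(1) Cs] by simp
  then show ?thesis unfolding rep_def by (rule someI)
qed

lemma coset_sub: assumes Y: "Y \<in> carrier Hq" shows "Y \<subseteq> carrier G"
  using subgroup.rcosets_carrier[OF Cs is_group] Y carrH by blast

definition act :: "'a set \<Rightarrow> 'a \<Rightarrow> 'a" where "act Y n = rep Y \<otimes> n \<otimes> inv (rep Y)"

lemma act_eq: assumes Y: "Y \<in> carrier Hq" and g: "g \<in> Y" and n: "n \<in> N"
  shows "act Y n = g \<otimes> n \<otimes> inv g"
  unfolding act_def using coset_conj_eq2[OF Y rep_in[OF Y] g n] .

lemma act_one: assumes n: "n \<in> N" shows "act \<one>\<^bsub>Hq\<^esub> n = n"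
proof -
  have "\<one>\<^bsub>Hq\<^esub> = C" by simp
  moreover have "C \<in> carrier Hq" using monoid.one_closed[OF group.is_monoid[OF Hgrp]] by simp
  moreover have "\<one> \<in> C" using Cs subgroup.one_closed by blast
  ultimately show ?thesis using act_eq[of C \<one> n] n Nc by auto
qed

lemma act_mult: assumes Y1: "Y1 \<in> carrier Hq" and Y2: "Y2 \<in> carrier Hq" and n: "n \<in> N"
  shows "act (Y1 \<otimes>\<^bsub>Hq\<^esub> Y2) n = act Y1 (act Y2 n)"
proof -
  have r1: "rep Y1 \<in> Y1" and r2: "rep Y2 \<in> Y2" using rep_in Y1 Y2 by auto
  have r1c: "rep Y1 \<in> carrier G" and r2c: "rep Y2 \<in> carrier G" using r1 r2 coset_sub Y1 Y2 by auto
  have Y12: "Y1 \<otimes>\<^bsub>Hq\<^esub> Y2 \<in> carrier Hq" using monoid.m_closed[OF group.is_monoid[OF Hgrp] Y1 Y2] .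
  have "rep Y1 \<otimes> rep Y2 \<in> Y1 \<otimes>\<^bsub>Hq\<^esub> Y2" using r1 r2 unfolding mult_FactGroup set_mult_def by auto
  then have "act (Y1 \<otimes>\<^bsub>Hq\<^esub> Y2) n = (rep Y1 \<otimes> rep Y2) \<otimes> n \<otimes> inv (rep Y1 \<otimes> rep Y2)"
    using act_eq[OF Y12 _ n] by blast
  also have "\<dots> = rep Y1 \<otimes> (rep Y2 \<otimes> n \<otimes> inv (rep Y2)) \<otimes> inv (rep Y1)"
    using r1c r2c n Nc by (simp add: m_assoc inv_mult_group subsetD)
  finally show ?thesis unfolding act_def .
qed

lemma act_N: assumes Y: "Y \<in> carrier Hq" and n: "n \<in> N" shows "act Y n \<in> N"
proof -
  have "rep Y \<in> carrier G" using rep_in[OF Y] coset_sub[OF Y] by auto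
  then show ?thesis unfolding act_def using normal_conj[OF Nn(1)] n by blast
qed

lemma ACT:
  assumes K: "subgroup K Hq" and cK: "card K = r0 ^ t" and r0: "Factorial_Ring.prime r0"
    and S: "S \<subseteq> N" and inv: "\<And>Y s. Y \<in> K \<Longrightarrow> s \<in> S \<Longrightarrow> act Y s \<in> S"
  shows "card S mod r0 = card {s \<in> S. \<forall>Y \<in> K. \<forall>g \<in> Y. g \<otimes> s \<otimes> inv g = s} mod r0"
proof -
  have Kc: "K \<subseteq> carrier Hq" using K subgroup.subset by blast
  have gK: "group (Hq\<lparr>carrier := K\<rparr>)" using group.subgroup_imp_group[OF Hgrp K] .
  have "card S mod r0 = card {s \<in> S. \<forall>Y \<in> carrier (Hq\<lparr>carrier := K\<rparr>). act Y s = s} mod r0"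
  proof (rule fix_mod[OF gK])
    show "finite (carrier (Hq\<lparr>carrier := K\<rparr>))" using finH Kc finite_subset by auto
    show "card (carrier (Hq\<lparr>carrier := K\<rparr>)) = r0 ^ t" using cK by simp
    show "Factorial_Ring.prime r0" by (rule r0)
    show "finite S" using finN S finite_subset by blast
    show "\<And>s. s \<in> S \<Longrightarrow> act \<one>\<^bsub>Hq\<lparr>carrier := K\<rparr>\<^esub> s = s" using act_one S by auto
    show "act (a \<otimes>\<^bsub>Hq\<lparr>carrier := K\<rparr>\<^esub> b) s = act a (act b s)"
      if "a \<in> carrier (Hq\<lparr>carrier := K\<rparr>)" "b \<in> carrier (Hq\<lparr>carrier := K\<rparr>)" "s \<in> S" for a b s
    proof -
      have "a \<in> carrier Hq" "b \<in> carrier Hq" "s \<in> N" using that Kc S by auto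
      then have "act (a \<otimes>\<^bsub>Hq\<^esub> b) s = act a (act b s)" by (rule act_mult)
      then show ?thesis by simp
    qed
    show "\<And>a s. a \<in> carrier (Hq\<lparr>carrier := K\<rparr>) \<Longrightarrow> s \<in> S \<Longrightarrow> act a s \<in> S" using inv by auto
  qed
  moreover have "{s \<in> S. \<forall>Y \<in> carrier (Hq\<lparr>carrier := K\<rparr>). act Y s = s} = {s \<in> S. \<forall>Y \<in> K. \<forall>g \<in> Y. g \<otimes> s \<otimes> inv g = s}"
  proof -
    have "(\<forall>Y \<in> K. act Y s = s) \<longleftrightarrow> (\<forall>Y \<in> K. \<forall>g \<in> Y. g \<otimes> s \<otimes> inv g = s)" if s: "s \<in> S" for s
    proof
      assume "\<forall>Y \<in> K. act Y s = s"
      then show "\<forall>Y \<in> K. \<forall>g \<in> Y. g \<otimes> s \<otimes> inv g = s" using act_eq Kc s S by (metis subsetD)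
    next
      assume a: "\<forall>Y \<in> K. \<forall>g \<in> Y. g \<otimes> s \<otimes> inv g = s"
      show "\<forall>Y \<in> K. act Y s = s"
      proof
        fix Y assume Y: "Y \<in> K"
        have YH: "Y \<in> carrier Hq" using Y Kc by auto
        show "act Y s = s" using act_eq[OF YH rep_in[OF YH]] a Y s S rep_in[OF YH] by (metis subsetD)
      qed
    qed
    then show ?thesis by auto
  qed
  ultimately show ?thesis by simp
qed

end

context mgrp begin

definition Fx :: "'a set set \<Rightarrow> 'a set" where
  "Fx K = {n \<in> N. \<forall>Y \<in> K. \<forall>g \<in> Y. g \<otimes> n \<otimes> inv g = n}"

lemma Fx_sub: "Fx K \<subseteq> N" unfolding Fx_def by auto

lemma FN: assumes K: "K \<lhd> Hq" shows "Fx K \<lhd> G"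
proof -
  have Ks: "subgroup K Hq" using K normal_imp_subgroup by blast
  have Kc: "K \<subseteq> carrier Hq" using Ks subgroup.subset by blast
  have gc: "g \<in> carrier G" if "Y \<in> K" "g \<in> Y" for Y g using coset_sub that Kc by blast
  show ?thesis
  proof (rule normalI')
    show "Fx K \<subseteq> carrier G" using Fx_sub Nc by blast
    show "\<one> \<in> Fx K" unfolding Fx_def using Ns subgroup.one_closed gc by fastforce
  next
    fix a b assume a: "a \<in> Fx K" and b: "b \<in> Fx K"
    have ac: "a \<in> carrier G" and bc: "b \<in> carrier G" using a b Fx_sub Nc by auto
    have "g \<otimes> (a \<otimes> b) \<otimes> inv g = a \<otimes> b" if "Y \<in> K" "g \<in> Y" for Y g
    proof -
      have g: "g \<in> carrier G" using gc that .
      have "g \<otimes> (a \<otimes> b) \<otimes> inv g = (g \<otimes> a \<otimes> inv g) \<otimes> (g \<otimes> b \<otimes> inv g)" using g ac bc by (simp add: m_assoc)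
      also have "\<dots> = a \<otimes> b" using a b that unfolding Fx_def by auto
      finally show ?thesis .
    qed
    moreover have "a \<in> N" "b \<in> N" using a b Fx_sub by auto
    then have "a \<otimes> b \<in> N" using subgroup.m_closed[OF Ns] by blast
    ultimately show "a \<otimes> b \<in> Fx K" unfolding Fx_def by auto
  next
    fix a assume a: "a \<in> Fx K"
    have ac: "a \<in> carrier G" using a Fx_sub Nc by auto
    have "g \<otimes> inv a \<otimes> inv g = inv a" if "Y \<in> K" "g \<in> Y" for Y g
    proof -
      have g: "g \<in> carrier G" using gc that .
      have "g \<otimes> inv a \<otimes> inv g = inv (g \<otimes> a \<otimes> inv g)" using g ac by (simp add: m_assoc inv_mult_group)
      also have "\<dots> = inv a" using a that unfolding Fx_def by auto
      finally show ?thesis .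
    qed
    moreover have "a \<in> N" using a Fx_sub by auto
    then have "inv a \<in> N" using subgroup.m_inv_closed[OF Ns] by blast
    ultimately show "inv a \<in> Fx K" unfolding Fx_def by auto
  next
    fix h a assume h: "h \<in> carrier G" and a: "a \<in> Fx K"
    have aN: "a \<in> N" using a Fx_sub by auto
    have ac: "a \<in> carrier G" using aN Nc by auto
    have haN: "h \<otimes> a \<otimes> inv h \<in> N" using normal_conj[OF Nn(1) h aN] .
    have "g \<otimes> (h \<otimes> a \<otimes> inv h) \<otimes> inv g = h \<otimes> a \<otimes> inv h" if Y: "Y \<in> K" and g: "g \<in> Y" for Y g
    proof -
      have YH: "Y \<in> carrier Hq" using Y Kc by auto
      obtain g0 where g0: "g0 \<in> carrier G" "Y = C #> g0" using cosetE[OF YH] by blast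
      have e1: "g \<otimes> (h \<otimes> a \<otimes> inv h) \<otimes> inv g = g0 \<otimes> (h \<otimes> a \<otimes> inv h) \<otimes> inv g0"
        using coset_conj_eq[OF YH g haN g0] .
      define e where "e = inv h \<otimes> g0 \<otimes> h"
      have ec: "e \<in> carrier G" unfolding e_def using h g0 by simp
      have xH: "C #> inv h \<in> carrier Hq" unfolding carrH using rcosetsI[OF Cc] h by simp
      have "(C #> inv h) \<otimes>\<^bsub>Hq\<^esub> Y \<otimes>\<^bsub>Hq\<^esub> inv\<^bsub>Hq\<^esub> (C #> inv h) \<in> K"
        using K xH Y group.normal_inv_iff[OF Hgrp] by blast
      moreover have "inv\<^bsub>Hq\<^esub> (C #> inv h) = C #> h"
        using normal.inv_FactGroup[OF Cn xH] normal.rcos_inv[OF Cn inv_closed[OF h]] h by simp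
      moreover have "(C #> inv h) <#> (C #> g0) <#> (C #> h) = C #> e"
        unfolding e_def using normal.rcos_sum[OF Cn] h g0 by simp
      ultimately have eK: "C #> e \<in> K" using g0(2) by simp
      have "e \<in> C #> e" using rcos_self[OF ec Cs] .
      then have "e \<otimes> a \<otimes> inv e = a" using a eK unfolding Fx_def by blast
      then have "h \<otimes> (e \<otimes> a \<otimes> inv e) \<otimes> inv h = h \<otimes> a \<otimes> inv h" by simp
      moreover have "h \<otimes> (e \<otimes> a \<otimes> inv e) \<otimes> inv h = g0 \<otimes> (h \<otimes> a \<otimes> inv h) \<otimes> inv g0"
        unfolding e_def using h g0 ac by (simp add: m_assoc inv_mult_group)
      ultimately show ?thesis using e1 by simp
    qed
    then show "h \<otimes> a \<otimes> inv h \<in> Fx K" unfolding Fx_def using haN by blast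
  qed
qed

lemma Triv: assumes Kc: "K \<subseteq> carrier Hq" and F: "Fx K = N" shows "K \<subseteq> {C}"
proof
  fix Y assume Y: "Y \<in> K"
  have YH: "Y \<in> carrier Hq" using Y Kc by auto
  obtain g0 where g0: "g0 \<in> carrier G" "Y = C #> g0" using cosetE[OF YH] by blast
  have g0Y: "g0 \<in> Y" using g0 rcos_self[OF g0(1) Cs] by simp
  have "\<forall>n \<in> N. g0 \<otimes> n \<otimes> inv g0 = n" using F Y g0Y unfolding Fx_def by blast
  have "g0 \<otimes> n = n \<otimes> g0" if n: "n \<in> N" for n
  proof -
    have nc: "n \<in> carrier G" using n Nc by auto
    have "g0 \<otimes> n \<otimes> inv g0 \<otimes> g0 = n \<otimes> g0" using \<open>\<forall>n \<in> N. g0 \<otimes> n \<otimes> inv g0 = n\<close> n by simp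
    then show ?thesis using nc g0(1) by (simp add: m_assoc)
  qed
  then have "\<forall>n \<in> N. g0 \<otimes> n = n \<otimes> g0" by blast
  then have "g0 \<in> C" unfolding centralizer_def using g0(1) by simp
  then have "C #> g0 = C" using subgroup.rcos_const[OF Cs is_group] by simp
  then show "Y \<in> {C}" using g0 by simp
qed

lemma Op1: assumes M: "M \<lhd> Hq" and cM: "card M = p ^ j" shows "M = {C}"
proof -
  have Ms: "subgroup M Hq" using M normal_imp_subgroup by blast
  have Mc: "M \<subseteq> carrier Hq" using Ms subgroup.subset by blast
  obtain n where n: "n \<ge> 1" "card N = p ^ n" using Np by blast
  have "card N mod p = card (Fx M) mod p"
    unfolding Fx_def by (rule ACT[OF Ms cM pp]) (use act_N Mc in auto)
  moreover have "card N mod p = 0" using n by simp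
  ultimately have pF: "p dvd card (Fx M)" by (simp add: dvd_eq_mod_eq_0)
  have oneF: "\<one> \<in> Fx M" using FN[OF M] normal_imp_subgroup subgroup.one_closed by blast
  have finF: "finite (Fx M)" using finN Fx_sub finite_subset by blast
  have "card (Fx M) \<noteq> 0" using oneF finF by (metis card_0_eq empty_iff)
  then have "card (Fx M) \<ge> p" using pF by (simp add: dvd_imp_le)
  then have c2: "card (Fx M) \<ge> 2" using p2 by linarith
  have "Fx M \<noteq> {\<one>}"
  proof
    assume "Fx M = {\<one>}"
    then show False using c2 by simp
  qed
  then have "Fx M = N" using Nn(3)[OF FN[OF M] Fx_sub] by blast
  then have "M \<subseteq> {C}" using Triv[OF Mc] by blast
  moreover have "C \<in> M" using Ms subgroup.one_closed by fastforce
  ultimately show ?thesis by blast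
qed

end

context group begin

lemma class_bound:
  assumes fin: "finite (carrier G)" and Q: "Q \<lhd> G" and cQ: "card Q = q" and qp: "Factorial_Ring.prime q"
  shows "order G \<le> (q - 1) * card (centralizer G Q)"
proof -
  have Qs: "subgroup Q G" using Q normal_imp_subgroup by blast
  have Qc: "Q \<subseteq> carrier G" using Qs subgroup.subset by blast
  have q2: "q \<ge> 2" using prime_ge_2_nat[OF qp] .
  have "\<not> Q \<subseteq> {\<one>}"
  proof
    assume "Q \<subseteq> {\<one>}"
    then have "card Q \<le> card {\<one>}" by (intro card_mono) auto
    then show False using cQ q2 by simp
  qed
  then obtain x where x: "x \<in> Q" "x \<noteq> \<one>" by blast
  have xc: "x \<in> carrier G" using x Qc by auto
  interpret ga: group_action G "carrier G" "\<lambda>g. (\<lambda>h \<in> carrier G. g \<otimes> h \<otimes> inv g)"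
    by (rule action_by_conjugation)
  have os: "card (orbit G (\<lambda>g. (\<lambda>h \<in> carrier G. g \<otimes> h \<otimes> inv g)) x) * card (stabilizer G (\<lambda>g. (\<lambda>h \<in> carrier G. g \<otimes> h \<otimes> inv g)) x) = order G"
    by (rule ga.orbit_stabilizer_theorem[OF xc])
  have orb: "orbit G (\<lambda>g. (\<lambda>h \<in> carrier G. g \<otimes> h \<otimes> inv g)) x \<subseteq> Q - {\<one>}"
  proof
    fix y assume "y \<in> orbit G (\<lambda>g. (\<lambda>h \<in> carrier G. g \<otimes> h \<otimes> inv g)) x"
    then obtain g where g: "g \<in> carrier G" "y = g \<otimes> x \<otimes> inv g" unfolding orbit_def using xc by auto
    have "y \<in> Q" using g x normal_conj[OF Q] by blast
    moreover have "y \<noteq> \<one>"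
    proof
      assume "y = \<one>"
      then have "inv g \<otimes> (g \<otimes> x \<otimes> inv g) \<otimes> g = inv g \<otimes> \<one> \<otimes> g" using g by simp
      then show False using g xc x by (simp add: m_assoc)
    qed
    ultimately show "y \<in> Q - {\<one>}" by simp
  qed
  have finQ: "finite Q" using fin Qc finite_subset by blast
  have "card (orbit G (\<lambda>g. (\<lambda>h \<in> carrier G. g \<otimes> h \<otimes> inv g)) x) \<le> card (Q - {\<one>})"
    using card_mono[OF _ orb] finQ by simp
  also have "\<dots> = q - 1" using cQ subgroup.one_closed[OF Qs] finQ by (simp add: card_Diff_singleton)
  finally have o1: "card (orbit G (\<lambda>g. (\<lambda>h \<in> carrier G. g \<otimes> h \<otimes> inv g)) x) \<le> q - 1" .
  have stab: "stabilizer G (\<lambda>g. (\<lambda>h \<in> carrier G. g \<otimes> h \<otimes> inv g)) x \<subseteq> centralizer G Q"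
  proof
    fix g assume "g \<in> stabilizer G (\<lambda>g. (\<lambda>h \<in> carrier G. g \<otimes> h \<otimes> inv g)) x"
    then have g: "g \<in> carrier G" "g \<otimes> x \<otimes> inv g = x" unfolding stabilizer_def using xc by auto
    then have "g \<otimes> x \<otimes> inv g \<otimes> g = x \<otimes> g" by simp
    then have "g \<otimes> x = x \<otimes> g" using g(1) xc by (simp add: m_assoc)
    then have "\<forall>y \<in> Q. g \<otimes> y = y \<otimes> g" using gen_comm[OF fin Qs cQ qp x g(1)] by blast
    then show "g \<in> centralizer G Q" unfolding centralizer_def using g by auto
  qed
  have b: "card (stabilizer G (\<lambda>g. (\<lambda>h \<in> carrier G. g \<otimes> h \<otimes> inv g)) x) \<le> card (centralizer G Q)"
    using card_mono[OF _ stab] fin unfolding centralizer_def by simp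
  have "card (orbit G (\<lambda>g. (\<lambda>h \<in> carrier G. g \<otimes> h \<otimes> inv g)) x) * card (stabilizer G (\<lambda>g. (\<lambda>h \<in> carrier G. g \<otimes> h \<otimes> inv g)) x) \<le> (q - 1) * card (centralizer G Q)"
    by (rule mult_le_mono[OF o1 b])
  then show ?thesis using os by simp
qed

end

declare mult_FactGroup[simp del] one_FactGroup[simp del]

context mgrp begin

lemma QbN: assumes Qs: "subgroup Qb Hq" and cQ: "card Qb = q" and r: "order Hq = q * p ^ r" "r \<ge> 1"
  shows "Qb \<lhd> Hq"
proof -
  interpret HH: group Hq by (rule Hgrp)
  have "(\<exists>Q0. subgroup Q0 Hq \<and> card Q0 = q \<and> (\<forall>Q'. subgroup Q' Hq \<and> card Q' = q \<longrightarrow> Q' = Q0))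
       \<or> (\<exists>M. M \<lhd> Hq \<and> M \<noteq> {\<one>\<^bsub>Hq\<^esub>} \<and> (\<exists>j. card M = p ^ j))"
    by (rule HH.not_simple[OF finH pp qp pneq r])
  then show ?thesis
  proof
    assume "\<exists>Q0. subgroup Q0 Hq \<and> card Q0 = q \<and> (\<forall>Q'. subgroup Q' Hq \<and> card Q' = q \<longrightarrow> Q' = Q0)"
    then obtain Q0 where Q0: "subgroup Q0 Hq" "card Q0 = q" "\<forall>Q'. subgroup Q' Hq \<and> card Q' = q \<longrightarrow> Q' = Q0" by blast
    have "Q0 \<lhd> Hq" using HH.unique_normal[OF finH Q0(1) Q0(2) Q0(3)] .
    moreover have "Qb = Q0" using Q0(3) Qs cQ by blast
    ultimately show ?thesis by simp
  next
    assume "\<exists>M. M \<lhd> Hq \<and> M \<noteq> {\<one>\<^bsub>Hq\<^esub>} \<and> (\<exists>j. card M = p ^ j)"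
    then obtain M j where "M \<lhd> Hq" "M \<noteq> {\<one>\<^bsub>Hq\<^esub>}" "card M = p ^ j" by blast
    then have "M = {C}" using Op1 by blast
    then show ?thesis using \<open>M \<noteq> {\<one>\<^bsub>Hq\<^esub>}\<close> by (simp add: one_FactGroup)
  qed
qed

lemma bound: assumes Qs: "subgroup Qb Hq" and cQ: "card Qb = q" and r: "order Hq = q * p ^ r" "r \<ge> 1"
  shows "p ^ r \<le> q - 1"
proof -
  interpret HH: group Hq by (rule Hgrp)
  have Qn: "Qb \<lhd> Hq" using QbN[OF Qs cQ r] .
  have Qc: "Qb \<subseteq> carrier Hq" using Qs subgroup.subset by blast
  define K where "K = centralizer Hq Qb"
  have Kn: "K \<lhd> Hq" unfolding K_def using HH.cent_normal[OF Qn] .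
  have Ks: "subgroup K Hq" using Kn normal_imp_subgroup by blast
  have Kc: "K \<subseteq> carrier Hq" using Ks subgroup.subset by blast
  have QK: "Qb \<subseteq> K"
  proof
    fix y assume y: "y \<in> Qb"
    have yc: "y \<in> carrier Hq" using y Qc by auto
    have "\<forall>z\<in>Qb. y \<otimes>\<^bsub>Hq\<^esub> z = z \<otimes>\<^bsub>Hq\<^esub> y"
    proof (cases "y = \<one>\<^bsub>Hq\<^esub>")
      case True
      show ?thesis
      proof
        fix z assume "z \<in> Qb"
        then have zc: "z \<in> carrier Hq" using Qc by auto
        have "\<one>\<^bsub>Hq\<^esub> \<otimes>\<^bsub>Hq\<^esub> z = z" using HH.l_one[OF zc] .
        moreover have "z \<otimes>\<^bsub>Hq\<^esub> \<one>\<^bsub>Hq\<^esub> = z" using HH.r_one[OF zc] .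
        ultimately show "y \<otimes>\<^bsub>Hq\<^esub> z = z \<otimes>\<^bsub>Hq\<^esub> y" using True by metis
      qed
    next
      case False
      show ?thesis using HH.gen_comm[OF finH Qs cQ qp y False yc] by simp
    qed
    then show "y \<in> K" unfolding K_def centralizer_def[of Hq Qb] using yc by simp
  qed
  have "q dvd card K" using HH.card_sub_dvd[OF finH Qs Ks QK] cQ by simp
  then obtain d where d: "card K = q * d" by blast
  have "card K dvd q * p ^ r" using HH.card_subgroup_dvd[OF finH Ks] r by simp
  then have "d dvd p ^ r" using d q2 by simp
  then obtain t where t: "d = p ^ t" using pp by (auto simp: divides_primepow_nat)
  have t0: "t = 0"
  proof (rule ccontr)
    assume t1: "t \<noteq> 0"
    interpret KG: group "Hq\<lparr>carrier := K\<rparr>" using HH.subgroup_imp_group Ks by blast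
    have oK: "order (Hq\<lparr>carrier := K\<rparr>) = p ^ t * q" using d t by (simp add: order_def mult.commute)
    have finK: "finite (carrier (Hq\<lparr>carrier := K\<rparr>))" using finH Kc finite_subset by auto
    obtain R0 where R0: "subgroup R0 (Hq\<lparr>carrier := K\<rparr>)" "card R0 = p ^ t"
      using sylow_thm[OF pp KG.is_group oK finK] by blast
    have R0s: "subgroup R0 Hq" using HH.incl_subgroup[OF Ks R0(1)] .
    have R0K: "R0 \<subseteq> K" using R0(1) subgroup.subset by fastforce
    have QsK: "subgroup Qb (Hq\<lparr>carrier := K\<rparr>)" using HH.subgroup_incl[OF Qs Ks QK] .
    have QR: "Qb \<inter> R0 = {\<one>\<^bsub>Hq\<^esub>}"
      using HH.coprime_inter[OF finH Qs R0s] cQ R0(2) cop by (simp add: coprime_commute)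
    have R0n: "R0 \<lhd> Hq" unfolding HH.normal_inv_iff
    proof (intro conjI ballI)
      show "subgroup R0 Hq" by (rule R0s)
      fix x h assume x: "x \<in> carrier Hq" and h: "h \<in> R0"
      have hc: "h \<in> carrier Hq" using h R0K Kc by auto
      define w where "w = x \<otimes>\<^bsub>Hq\<^esub> h \<otimes>\<^bsub>Hq\<^esub> inv\<^bsub>Hq\<^esub> x"
      have wK: "w \<in> K" unfolding w_def using HH.normal_conj[OF Kn x] h R0K by blast
      have "h [^]\<^bsub>Hq\<^esub> p ^ t = \<one>\<^bsub>Hq\<^esub>" using HH.pow_sub_order[OF finH R0s h] R0(2) by simp
      then have wp: "w [^]\<^bsub>Hq\<^esub> p ^ t = \<one>\<^bsub>Hq\<^esub>" unfolding w_def using HH.conj_pow[OF x hc] x by simp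
      have QR': "Qb \<inter> R0 = {\<one>\<^bsub>Hq\<lparr>carrier := K\<rparr>\<^esub>}" using QR by simp
      have ce: "card Qb * card R0 = order (Hq\<lparr>carrier := K\<rparr>)" using oK cQ R0(2) by simp
      have wK': "w \<in> carrier (Hq\<lparr>carrier := K\<rparr>)" using wK by simp
      have "\<exists>a\<in>Qb. \<exists>y\<in>R0. w = a \<otimes>\<^bsub>Hq\<lparr>carrier := K\<rparr>\<^esub> y"
        by (rule KG.prod_decomp[OF finK QsK R0(1) QR' ce wK'])
      then obtain u rr where ur: "u \<in> Qb" "rr \<in> R0" "w = u \<otimes>\<^bsub>Hq\<^esub> rr" by auto
      have uc: "u \<in> carrier Hq" and rc: "rr \<in> carrier Hq" using ur Qc R0K Kc by auto
      have comm: "u \<otimes>\<^bsub>Hq\<^esub> rr = rr \<otimes>\<^bsub>Hq\<^esub> u" using ur R0K unfolding K_def centralizer_def[of Hq Qb] by auto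
      have "rr [^]\<^bsub>Hq\<^esub> p ^ t = \<one>\<^bsub>Hq\<^esub>" using HH.pow_sub_order[OF finH R0s ur(2)] R0(2) by simp
      then have "u [^]\<^bsub>Hq\<^esub> p ^ t = \<one>\<^bsub>Hq\<^esub>" using wp ur(3) HH.pow_mult_distrib[OF comm uc rc] uc by simp
      moreover have "u [^]\<^bsub>Hq\<^esub> q = \<one>\<^bsub>Hq\<^esub>" using HH.pow_sub_order[OF finH Qs ur(1)] cQ by simp
      ultimately have "u = \<one>\<^bsub>Hq\<^esub>" using HH.coprime_pow_one[OF uc] cop by blast
      then have "w = rr" using ur(3) rc by simp
      then show "x \<otimes>\<^bsub>Hq\<^esub> h \<otimes>\<^bsub>Hq\<^esub> inv\<^bsub>Hq\<^esub> x \<in> R0" using ur(2) unfolding w_def by simp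
    qed
    have "R0 = {C}" using Op1[OF R0n R0(2)] .
    then have "p ^ t = 1" using R0(2) by simp
    then show False using t1 p2 by simp
  qed
  have "card K = q" using d t t0 by simp
  have "order Hq \<le> (q - 1) * card K" unfolding K_def using HH.class_bound[OF finH Qn cQ qp] .
  then have "q * p ^ r \<le> (q - 1) * q" using r \<open>card K = q\<close> by simp
  then show ?thesis using q2 by (simp add: mult.commute)
qed

end

lemma mod1_ge: fixes x q :: nat assumes "x mod q = 1" "x \<noteq> 1" "q \<ge> 2" shows "x \<ge> q + 1"
proof -
  have x: "x = q * (x div q) + 1" using assms(1) by (metis mult_div_mod_eq)
  have "x div q \<noteq> 0"
  proof
    assume "x div q = 0"
    then have "x = 1" using x by simp
    then show False using assms(2) by simp
  qed
  then have "q * (x div q) \<ge> q" by simp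
  then show ?thesis using x by linarith
qed

context mgrp begin

lemma irred: assumes S: "sylow_subgroup Hq q Qb" shows "acts_irreducibly G Qb N"
proof -
  interpret HH: group Hq by (rule Hgrp)
  obtain r where r: "r \<ge> 1" "order Hq = q * p ^ r" using Hr by blast
  obtain n where n: "n \<ge> 1" "card N = p ^ n" using Np by blast
  have Qs: "subgroup Qb Hq" and a: "\<exists>a. card Qb = q ^ a" and nd: "\<not> q dvd (order Hq div card Qb)"
    using S unfolding sylow_subgroup_def by auto
  obtain a where ca: "card Qb = q ^ a" using a by blast
  have dv: "card Qb dvd q * p ^ r" using HH.card_subgroup_dvd[OF finH Qs] r by simp
  have cQ: "card Qb = q"
  proof (cases "a = 0")
    case True
    then have "order Hq div card Qb = q * p ^ r" using ca r by simp
    then show ?thesis using nd by simp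
  next
    case False
    have "a \<le> 1"
    proof (rule ccontr)
      assume "\<not> a \<le> 1"
      then have "q ^ 2 dvd q ^ a" by (simp add: le_imp_power_dvd)
      then have "q * q dvd q * p ^ r" using dv ca by (metis power2_eq_square dvd_trans)
      then have "q dvd p ^ r" using q2 by simp
      then have "q dvd p" using qp prime_dvd_power by blast
      then show False using pp qp pneq by (metis prime_nat_iff prime_gt_1_nat less_irrefl)
    qed
    then show ?thesis using ca False by (metis le_antisym less_one not_le power_one_right)
  qed
  have Qc: "Qb \<subseteq> carrier Hq" using Qs subgroup.subset by blast
  have Qn: "Qb \<lhd> Hq" using QbN[OF Qs cQ r(2) r(1)] .
  have bnd: "p ^ r \<le> q - 1" using bound[OF Qs cQ r(2) r(1)] .
  have F1: "Fx Qb = {\<one>}"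
  proof -
    have "Fx Qb = {\<one>} \<or> Fx Qb = N" using Nn(3)[OF FN[OF Qn] Fx_sub] .
    moreover have "Fx Qb \<noteq> N"
    proof
      assume "Fx Qb = N"
      then have "Qb \<subseteq> {C}" using Triv[OF Qc] by blast
      then have "card Qb \<le> card {C}" by (intro card_mono) auto
      then show False using cQ q2 by simp
    qed
    ultimately show ?thesis by blast
  qed
  have cQ1: "card Qb = q ^ 1" using cQ by simp
  have cN: "card N mod q = 1"
  proof -
    have "card N mod q = card (Fx Qb) mod q"
      unfolding Fx_def by (rule ACT[OF Qs cQ1 qp]) (use act_N Qc in auto)
    then show ?thesis using F1 q2 by simp
  qed
  show ?thesis unfolding acts_irreducibly_def
  proof (intro allI impI)
    fix M assume M: "subgroup M G \<and> M \<subseteq> N \<and> (\<forall>Y\<in>Qb. \<forall>g\<in>Y. \<forall>m\<in>M. g \<otimes> m \<otimes> inv g \<in> M)"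
    have Ms: "subgroup M G" and MN: "M \<subseteq> N" and Minv: "\<forall>Y\<in>Qb. \<forall>g\<in>Y. \<forall>m\<in>M. g \<otimes> m \<otimes> inv g \<in> M"
      using M by auto
    show "M = {\<one>} \<or> M = N"
    proof (rule ccontr)
      assume ne: "\<not> (M = {\<one>} \<or> M = N)"
      have cM: "card M mod q = 1"
      proof -
        have "card M mod q = card {s \<in> M. \<forall>Y \<in> Qb. \<forall>g \<in> Y. g \<otimes> s \<otimes> inv g = s} mod q"
        proof (rule ACT[OF Qs cQ1 qp MN])
          fix Y s assume Y: "Y \<in> Qb" and s: "s \<in> M"
          have YH: "Y \<in> carrier Hq" using Y Qc by auto
          show "act Y s \<in> M" unfolding act_def using Minv Y rep_in[OF YH] s by blast
        qed
        moreover have "{s \<in> M. \<forall>Y \<in> Qb. \<forall>g \<in> Y. g \<otimes> s \<otimes> inv g = s} = M \<inter> Fx Qb"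
          unfolding Fx_def using MN by auto
        moreover have "M \<inter> Fx Qb = {\<one>}" using F1 Ms subgroup.one_closed by fastforce
        ultimately show ?thesis using q2 by simp
      qed
      have "card M dvd card N" using card_sub_dvd[OF fin Ms Ns MN] .
      then obtain d where d: "card N = card M * d" by blast
      have "d mod q = 1"
      proof -
        have "card N mod q = ((card M mod q) * (d mod q)) mod q" using d by (simp add: mod_mult_eq)
        then show ?thesis using cN cM by simp
      qed
      moreover have "d \<noteq> 1"
      proof
        assume "d = 1"
        then have "card M = card N" using d by simp
        then have "M = N" using card_subset_eq[OF finN MN] by simp
        then show False using ne by simp
      qed
      ultimately have dq: "d \<ge> q + 1" using mod1_ge q2 by blast
      have "card M \<noteq> 1" using card_ne1[OF Ms] ne by blast
      then have Mq: "card M \<ge> q + 1" using mod1_ge cM q2 by blast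
      have "(q + 1) * (q + 1) \<le> card M * d" by (rule mult_le_mono[OF Mq dq])
      then have "(q + 1) * (q + 1) \<le> card N" using d by simp
      moreover have "card N < q * p ^ r" using pn_lt[OF n(2) r(2)] n(2) by simp
      moreover have "q * p ^ r \<le> q * (q - 1)" using bnd by simp
      ultimately have "(q + 1) * (q + 1) < q * (q - 1)" by linarith
      moreover have "q * (q - 1) \<le> (q + 1) * (q + 1)" by (rule mult_le_mono) auto
      ultimately show False by linarith
    qed
  qed
qed

end

theorem proposition8:
  fixes G :: "('a, 'b) monoid_scheme" and p q k :: nat and N :: "'a set"
  assumes "group G" and "finite (carrier G)"
    and "Factorial_Ring.prime p" and "Factorial_Ring.prime q" and "p < q" and "k \<ge> 1"
    and "order G = q * p ^ k"
    and "mstar G = order G"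
    and "minimal_normal N G"
  shows "(\<exists>n \<ge> 1. card N = p ^ n \<and>
            (\<exists>r \<ge> 1. order (G Mod centralizer G N) = q * p ^ r \<and> p ^ n < q * p ^ r))
       \<and> (\<forall>x \<in> N. \<forall>y \<in> N. x \<otimes>\<^bsub>G\<^esub> y = y \<otimes>\<^bsub>G\<^esub> x)
       \<and> (\<forall>x \<in> N. x [^]\<^bsub>G\<^esub> p = \<one>\<^bsub>G\<^esub>)
       \<and> (\<forall>Q. sylow_subgroup (G Mod centralizer G N) q Q \<longrightarrow> acts_irreducibly G Q N)"
proof -
  interpret M: mgrp G p q k N
    by (rule mgrp.intro[OF assms(1)]) (unfold_locales, use assms in auto)
  obtain n where n: "n \<ge> 1" "card N = p ^ n" using M.Np by blast
  obtain r where r: "r \<ge> 1" "order (G Mod centralizer G N) = q * p ^ r" using M.Hr by blast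
  have "p ^ n < q * p ^ r" using M.pn_lt[OF n(2) r(2)] .
  then have c1: "\<exists>n \<ge> 1. card N = p ^ n \<and>
            (\<exists>r \<ge> 1. order (G Mod centralizer G N) = q * p ^ r \<and> p ^ n < q * p ^ r)"
    using n r by blast
  show ?thesis using c1 M.Nab M.Nexp M.irred by blast
qed

end
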